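(* Let $\mathcal Z\subseteq N$ be the set of all points $\gamma(t)$ ($t\neq0$) that are conjugate to $\gamma(0)=1$ along some geodesic $\gamma$ with $\gamma(0)=1$ and $\dot\gamma(0)=x_0\in\mathfrak v\setminus\{0\}$. Then $\mathcal Z\subseteq\exp(\mathfrak v)$, and $\mathcal Z$ is a real-analytic variety (a real-analytic subset) of the embedded submanifold $\exp(\mathfrak v)$ of $N$, where $\exp:\mathfrak n\to N$ is the Lie group exponential map.
   Context: Let $N$ be a connected, simply connected, 2-step nilpotent real Lie group with Lie algebra $\mathfrak n$ and center $\mathfrak z$; its Lie group exponential map $\exp:\mathfrak n\to N$ is a diffeomorphism. Let $\langle\,,\rangle$ be an inner product on $\mathfrak n$, meaning a nondegenerate symmetric bilinear form (possibly indefinite); the same symbol denotes the induced left-invariant pseudo-Riemannian metric on $N$, with Levi-Civita connection $\nabla$. Assume the restriction of $\langle\,,\rangle$ to $\mathfrak z$ is nondegenerate and put $\mathfrak v=\mathfrak z^\perp$, so $\mathfrak n=\mathfrak z\oplus\mathfrak v$. A Jacobi field along a geodesic $\gamma$ is a vector field $Y$ along $\gamma$ with $\nabla_{\dot\gamma}\nabla_{\dot\gamma}Y+R(Y,\dot\gamma)\dot\gamma=0$, where $R(X,Y)=\nabla_X\nabla_Y-\nabla_Y\nabla_X-\nabla_{[X,Y]}$; $\gamma(t_0)$ ($t_0\ne 0$) is conjugate to $\gamma(0)$ along $\gamma$ if some nontrivial Jacobi field vanishes at $0$ and $t_0$. *)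

theory Defs
  imports "HOL-Analysis.Analysis"
begin

(* The Lie algebra n is modelled by a finite-dimensional real vector
   space 'n::euclidean_space (its Euclidean inner product plays no role), with Lie
   bracket br and a (possibly indefinite) scalar product B.
   Since exp : n -> N is a diffeomorphism, N is identified with n via exp
   (exponential coordinates); in these coordinates the group law of a simply
   connected 2-step nilpotent group is  x * y = x + y + 1/2 [x,y]  (BCH), the
   identity element is 0, and exp(v) is the linear subspace v itself. *)

definition two_step_nilpotent :: "('n::euclidean_space \<Rightarrow> 'n \<Rightarrow> 'n) \<Rightarrow> bool" where
  "two_step_nilpotent br \<longleftrightarrow>
     bilinear br \<and> (\<forall>x y. br x y = - br y x) \<and>
     (\<forall>x y z. br (br x y) z = 0) \<and> (\<exists>x y. br x y \<noteq> 0)"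

definition scalar_product :: "('n::euclidean_space \<Rightarrow> 'n \<Rightarrow> real) \<Rightarrow> bool" where
  "scalar_product B \<longleftrightarrow> bilinear B \<and> (\<forall>x y. B x y = B y x) \<and>
     (\<forall>x. (\<forall>y. B x y = 0) \<longrightarrow> x = 0)"

definition center :: "('n::euclidean_space \<Rightarrow> 'n \<Rightarrow> 'n) \<Rightarrow> 'n set" where
  "center br = {z. \<forall>y. br z y = 0}"

definition orth_compl :: "('n::euclidean_space \<Rightarrow> 'n \<Rightarrow> real) \<Rightarrow> 'n set \<Rightarrow> 'n set" where
  "orth_compl B S = {x. \<forall>z\<in>S. B x z = 0}"

definition nondeg_on :: "('n::euclidean_space \<Rightarrow> 'n \<Rightarrow> real) \<Rightarrow> 'n set \<Rightarrow> bool" where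
  "nondeg_on B S \<longleftrightarrow> (\<forall>x\<in>S. (\<forall>y\<in>S. B x y = 0) \<longrightarrow> x = 0)"

definition gmult :: "('n::euclidean_space \<Rightarrow> 'n \<Rightarrow> 'n) \<Rightarrow> 'n \<Rightarrow> 'n \<Rightarrow> 'n" where
  "gmult br x y = x + y + (1/2) *\<^sub>R br x y"

(* inverse of the differential at 0 of left translation by p:
   d(L_p)_0 v = v + 1/2 [p,v], whose inverse is v - 1/2 [p,v] (2-step) *)
definition dLinv :: "('n::euclidean_space \<Rightarrow> 'n \<Rightarrow> 'n) \<Rightarrow> 'n \<Rightarrow> 'n \<Rightarrow> 'n" where
  "dLinv br p v = v - (1/2) *\<^sub>R br p v"

definition metric :: "('n::euclidean_space \<Rightarrow> 'n \<Rightarrow> 'n) \<Rightarrow> ('n \<Rightarrow> 'n \<Rightarrow> real)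
     \<Rightarrow> 'n \<Rightarrow> 'n \<Rightarrow> 'n \<Rightarrow> real" where
  "metric br B p v w = B (dLinv br p v) (dLinv br p w)"

definition dmetric :: "('n::euclidean_space \<Rightarrow> 'n \<Rightarrow> 'n) \<Rightarrow> ('n \<Rightarrow> 'n \<Rightarrow> real)
     \<Rightarrow> 'n \<Rightarrow> 'n \<Rightarrow> 'n \<Rightarrow> 'n \<Rightarrow> real" where
  "dmetric br B p a v w =
     (THE d. ((\<lambda>s. metric br B (p + s *\<^sub>R a) v w) has_real_derivative d) (at 0))"

(* Christoffel symbols of the Levi-Civita connection in coordinates:
   Gamma p v w = nabla_v w for constant coordinate fields v, w, i.e.
   g(Gamma(v,w), z) = 1/2 (D_v g(w,z) + D_w g(v,z) - D_z g(v,w)) *)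
definition christoffel :: "('n::euclidean_space \<Rightarrow> 'n \<Rightarrow> 'n) \<Rightarrow> ('n \<Rightarrow> 'n \<Rightarrow> real)
     \<Rightarrow> 'n \<Rightarrow> 'n \<Rightarrow> 'n \<Rightarrow> 'n" where
  "christoffel br B p v w =
     (THE u. \<forall>z. metric br B p u z =
        (1/2) * (dmetric br B p v w z + dmetric br B p w v z - dmetric br B p z v w))"

definition dchristoffel :: "('n::euclidean_space \<Rightarrow> 'n \<Rightarrow> 'n) \<Rightarrow> ('n \<Rightarrow> 'n \<Rightarrow> real)
     \<Rightarrow> 'n \<Rightarrow> 'n \<Rightarrow> 'n \<Rightarrow> 'n \<Rightarrow> 'n" where
  "dchristoffel br B p a v w =
     (THE d. ((\<lambda>s. christoffel br B (p + s *\<^sub>R a) v w) has_vector_derivative d) (at 0))"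

(* Curvature R(v,w)z = nabla_v nabla_w z - nabla_w nabla_v z - nabla_[v,w] z at p,
   computed with constant coordinate fields (whose coordinate bracket vanishes). *)
definition curv :: "('n::euclidean_space \<Rightarrow> 'n \<Rightarrow> 'n) \<Rightarrow> ('n \<Rightarrow> 'n \<Rightarrow> real)
     \<Rightarrow> 'n \<Rightarrow> 'n \<Rightarrow> 'n \<Rightarrow> 'n \<Rightarrow> 'n" where
  "curv br B p v w z =
       dchristoffel br B p v w z + christoffel br B p v (christoffel br B p w z)
     - dchristoffel br B p w v z - christoffel br B p w (christoffel br B p v z)"

definition vel :: "(real \<Rightarrow> 'n::euclidean_space) \<Rightarrow> real \<Rightarrow> 'n" where
  "vel c t = vector_derivative c (at t)"

definition geodesic_on :: "('n::euclidean_space \<Rightarrow> 'n \<Rightarrow> 'n) \<Rightarrow> ('n \<Rightarrow> 'n \<Rightarrow> real)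
     \<Rightarrow> real set \<Rightarrow> (real \<Rightarrow> 'n) \<Rightarrow> bool" where
  "geodesic_on br B I \<gamma> \<longleftrightarrow>
     (\<forall>t\<in>I. \<gamma> differentiable (at t) \<and>
        (\<exists>a. (vel \<gamma> has_vector_derivative a) (at t) \<and>
             a + christoffel br B (\<gamma> t) (vel \<gamma> t) (vel \<gamma> t) = 0))"

definition covder :: "('n::euclidean_space \<Rightarrow> 'n \<Rightarrow> 'n) \<Rightarrow> ('n \<Rightarrow> 'n \<Rightarrow> real)
     \<Rightarrow> (real \<Rightarrow> 'n) \<Rightarrow> (real \<Rightarrow> 'n) \<Rightarrow> real \<Rightarrow> 'n" where
  "covder br B \<gamma> Y t = vel Y t + christoffel br B (\<gamma> t) (vel \<gamma> t) (Y t)"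

definition jacobi_on :: "('n::euclidean_space \<Rightarrow> 'n \<Rightarrow> 'n) \<Rightarrow> ('n \<Rightarrow> 'n \<Rightarrow> real)
     \<Rightarrow> real set \<Rightarrow> (real \<Rightarrow> 'n) \<Rightarrow> (real \<Rightarrow> 'n) \<Rightarrow> bool" where
  "jacobi_on br B I \<gamma> Y \<longleftrightarrow>
     (\<forall>t\<in>I. Y differentiable (at t) \<and> covder br B \<gamma> Y differentiable (at t) \<and>
        covder br B \<gamma> (covder br B \<gamma> Y) t
          + curv br B (\<gamma> t) (Y t) (vel \<gamma> t) (vel \<gamma> t) = 0)"

definition conjugate_along :: "('n::euclidean_space \<Rightarrow> 'n \<Rightarrow> 'n) \<Rightarrow> ('n \<Rightarrow> 'n \<Rightarrow> real)
     \<Rightarrow> real set \<Rightarrow> (real \<Rightarrow> 'n) \<Rightarrow> real \<Rightarrow> bool" where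
  "conjugate_along br B I \<gamma> t0 \<longleftrightarrow>
     (\<exists>Y. jacobi_on br B I \<gamma> Y \<and> (\<exists>t\<in>I. Y t \<noteq> 0) \<and> Y 0 = 0 \<and> Y t0 = 0)"

definition conj_locus :: "('n::euclidean_space \<Rightarrow> 'n \<Rightarrow> 'n) \<Rightarrow> ('n \<Rightarrow> 'n \<Rightarrow> real) \<Rightarrow> 'n set" where
  "conj_locus br B =
     {\<gamma> t | \<gamma> I t. is_interval I \<and> open I \<and> 0 \<in> I \<and> t \<in> I \<and> t \<noteq> 0 \<and>
        geodesic_on br B I \<gamma> \<and> \<gamma> 0 = 0 \<and>
        vel \<gamma> 0 \<in> orth_compl B (center br) - {0} \<and>
        conjugate_along br B I \<gamma> t}"

definition multi_indices :: "('n::euclidean_space \<Rightarrow> nat) set" where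
  "multi_indices = {\<alpha>. \<forall>i. i \<notin> Basis \<longrightarrow> \<alpha> i = 0}"

definition monom :: "'n::euclidean_space \<Rightarrow> ('n \<Rightarrow> nat) \<Rightarrow> real" where
  "monom h \<alpha> = (\<Prod>i\<in>Basis. (h \<bullet> i) ^ \<alpha> i)"

definition real_analytic_at :: "('n::euclidean_space \<Rightarrow> real) \<Rightarrow> 'n \<Rightarrow> bool" where
  "real_analytic_at f p \<longleftrightarrow>
     (\<exists>r>0. \<exists>c. \<forall>h. norm h < r \<longrightarrow>
        ((\<lambda>\<alpha>. c \<alpha> * monom h \<alpha>) has_sum f (p + h)) multi_indices)"

definition real_analytic_on :: "'n::euclidean_space set \<Rightarrow> ('n \<Rightarrow> real) \<Rightarrow> bool" where
  "real_analytic_on U f \<longleftrightarrow> (\<forall>p\<in>U. real_analytic_at f p)"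

(* Z is a real-analytic subset (variety) of the embedded submanifold V (here a linear
   subspace): Z is contained in V and near each point of V it is the common zero set
   in V of finitely many real-analytic functions.  (Analytic functions on open subsets
   of a linear subspace V are exactly restrictions of ambient ones.) *)
definition real_analytic_subset :: "'n::euclidean_space set \<Rightarrow> 'n set \<Rightarrow> bool" where
  "real_analytic_subset V Z \<longleftrightarrow> Z \<subseteq> V \<and>
     (\<forall>p\<in>V. \<exists>U F. open U \<and> p \<in> U \<and> finite F \<and> (\<forall>f\<in>F. real_analytic_on U f) \<and>
        Z \<inter> U = {x \<in> V \<inter> U. \<forall>f\<in>F. f x = 0})"

end

theory Submission
  imports Defs "Jordan_Normal_Form.Determinant"
begin


locale nil2 =
  fixes br :: "'n::euclidean_space \<Rightarrow> 'n \<Rightarrow> 'n" and B :: "'n \<Rightarrow> 'n \<Rightarrow> real"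
  assumes tsn: "two_step_nilpotent br"
    and sp: "scalar_product B"
    and ndc: "nondeg_on B (center br)"
begin

lemma br_bil: "bilinear br" using tsn unfolding two_step_nilpotent_def by blast
lemma br_lin1: "linear (\<lambda>x. br x y)" using br_bil unfolding bilinear_def by blast
lemma br_lin2: "linear (br x)" using br_bil unfolding bilinear_def by blast
lemma B_bil: "bilinear B" using sp unfolding scalar_product_def by blast
lemma B_lin1: "linear (\<lambda>x. B x y)" using B_bil unfolding bilinear_def by blast
lemma B_lin2: "linear (B x)" using B_bil unfolding bilinear_def by blast

lemma br_add1[simp]: "br (x + y) z = br x z + br y z" using linear_add[OF br_lin1] .
lemma br_add2[simp]: "br z (x + y) = br z x + br z y" using linear_add[OF br_lin2] .
lemma br_diff1[simp]: "br (x - y) z = br x z - br y z" using linear_diff[OF br_lin1] .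
lemma br_diff2[simp]: "br z (x - y) = br z x - br z y" using linear_diff[OF br_lin2] .
lemma br_scale1[simp]: "br (r *\<^sub>R x) z = r *\<^sub>R br x z" using linear_scale[OF br_lin1] .
lemma br_scale2[simp]: "br z (r *\<^sub>R x) = r *\<^sub>R br z x" using linear_scale[OF br_lin2] .
lemma br_neg1[simp]: "br (- x) z = - br x z" using linear_neg[OF br_lin1] .
lemma br_neg2[simp]: "br z (- x) = - br z x" using linear_neg[OF br_lin2] .
lemma br_zero1[simp]: "br 0 z = 0" using linear_0[OF br_lin1] .
lemma br_zero2[simp]: "br z 0 = 0" using linear_0[OF br_lin2] .
lemma br_anti: "br x y = - br y x" using tsn unfolding two_step_nilpotent_def by blast
lemma br_self[simp]: "br x x = 0"
proof -
  have "br x x + br x x = 0" using br_anti[of x x] by (simp add: eq_neg_iff_add_eq_0)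
  hence "(2::real) *\<^sub>R br x x = 0" by (simp add: scaleR_2)
  thus ?thesis by simp
qed
lemma br_br1[simp]: "br (br x y) z = 0" using tsn unfolding two_step_nilpotent_def by blast
lemma br_br2[simp]: "br z (br x y) = 0" using br_anti[of z "br x y"] by simp
lemma br_sum2: "br z (sum f S) = (\<Sum>a\<in>S. br z (f a))" using linear_sum[OF br_lin2] .
lemma br_sum1: "br (sum f S) z = (\<Sum>a\<in>S. br (f a) z)" using linear_sum[OF br_lin1, of f S] .

lemma B_add1[simp]: "B (x + y) z = B x z + B y z" using linear_add[OF B_lin1] .
lemma B_add2[simp]: "B z (x + y) = B z x + B z y" using linear_add[OF B_lin2] .
lemma B_diff1[simp]: "B (x - y) z = B x z - B y z" using linear_diff[OF B_lin1] .
lemma B_diff2[simp]: "B z (x - y) = B z x - B z y" using linear_diff[OF B_lin2] .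
lemma B_scale1[simp]: "B (r *\<^sub>R x) z = r * B x z" using linear_scale[OF B_lin1] by simp
lemma B_scale2[simp]: "B z (r *\<^sub>R x) = r * B z x" using linear_scale[OF B_lin2] by simp
lemma B_neg1[simp]: "B (- x) z = - B x z" using linear_neg[OF B_lin1] .
lemma B_neg2[simp]: "B z (- x) = - B z x" using linear_neg[OF B_lin2] .
lemma B_zero1[simp]: "B 0 z = 0" using linear_0[OF B_lin1] .
lemma B_zero2[simp]: "B z 0 = 0" using linear_0[OF B_lin2] .
lemma B_sym: "B x y = B y x" using sp unfolding scalar_product_def by auto
lemma B_nondeg: "(\<And>y. B x y = 0) \<Longrightarrow> x = 0" using sp unfolding scalar_product_def by auto
lemma B_ext: "(\<And>y. B x y = B x' y) \<Longrightarrow> x = x'"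
  using B_nondeg[of "x - x'"] by simp

abbreviation "C \<equiv> center br"
abbreviation "V \<equiv> orth_compl B (center br)"

lemma br_in_C[simp]: "br x y \<in> C" unfolding center_def by simp
lemma C_br1: "c \<in> C \<Longrightarrow> br c y = 0" unfolding center_def by simp
lemma C_br2: "c \<in> C \<Longrightarrow> br y c = 0" using C_br1 br_anti[of y c] by simp
lemma V_B: "x \<in> V \<Longrightarrow> c \<in> C \<Longrightarrow> B x c = 0" unfolding orth_compl_def by auto
lemma CV_zero: "x \<in> V \<Longrightarrow> x \<in> C \<Longrightarrow> x = 0"
  using ndc unfolding nondeg_on_def orth_compl_def by auto

definition RZ :: "'n \<Rightarrow> 'n" where "RZ w = (\<Sum>i\<in>Basis. B w i *\<^sub>R i)"

lemma RZ_inner: "RZ w \<bullet> z = B w z"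
proof -
  have "RZ w \<bullet> z = (\<Sum>i\<in>Basis. B w i * (i \<bullet> z))"
    unfolding RZ_def by (simp add: inner_sum_left)
  also have "\<dots> = B w (\<Sum>i\<in>Basis. (z \<bullet> i) *\<^sub>R i)"
    using linear_sum[OF B_lin2[of w], of "\<lambda>i. (z \<bullet> i) *\<^sub>R i" Basis]
    by (simp add: inner_commute mult.commute)
  also have "\<dots> = B w z" by (simp add: euclidean_representation)
  finally show ?thesis .
qed

lemma RZ_linear: "linear RZ"
  by (rule linearI) (simp_all add: RZ_def scaleR_add_left sum.distrib scaleR_sum_right)

lemma RZ_inj: "inj RZ"
proof (rule injI)
  fix x y assume "RZ x = RZ y"
  then have "B x z = B y z" for z using RZ_inner by metis
  then show "x = y" by (rule B_ext)
qed

lemma riesz: assumes "linear \<phi>" shows "\<exists>w. \<forall>z. B w z = \<phi> z"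
proof -
  have "surj RZ" using linear_injective_imp_surjective[OF RZ_linear RZ_inj refl] .
  then obtain w where w: "RZ w = (\<Sum>i\<in>Basis. \<phi> i *\<^sub>R i)" by (metis surjD)
  have "B w z = \<phi> z" for z
  proof -
    have "B w z = (\<Sum>i\<in>Basis. \<phi> i *\<^sub>R i) \<bullet> z" using RZ_inner w by metis
    also have "\<dots> = (\<Sum>i\<in>Basis. (z \<bullet> i) * \<phi> i)" by (simp add: inner_sum_right inner_commute mult.commute)
    also have "\<dots> = \<phi> (\<Sum>i\<in>Basis. (z \<bullet> i) *\<^sub>R i)"
      using linear_sum[OF assms, of "\<lambda>i. (z \<bullet> i) *\<^sub>R i" Basis] linear_scale[OF assms] by simp
    also have "\<dots> = \<phi> z" by (simp add: euclidean_representation)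
    finally show ?thesis .
  qed
  then show ?thesis by blast
qed

definition K :: "'n \<Rightarrow> 'n \<Rightarrow> 'n" where "K a v = (THE w. \<forall>z. B w z = B a (br v z))"

lemma K_prop: "B (K a v) z = B a (br v z)"
proof -
  have "linear (\<lambda>z. B a (br v z))"
    by (rule linearI) simp_all
  then obtain w where w: "\<forall>z. B w z = B a (br v z)" using riesz by blast
  have "(THE w. \<forall>z. B w z = B a (br v z)) = w"
    by (rule the_equality) (use w B_ext in metis)+
  then show ?thesis using w unfolding K_def by simp
qed

lemma K_char: "(\<And>z. B w z = B a (br v z)) \<Longrightarrow> K a v = w"
  by (rule B_ext) (simp add: K_prop)

lemma K_add1[simp]: "K (x + y) v = K x v + K y v" by (rule K_char) (simp add: K_prop)
lemma K_add2[simp]: "K a (x + y) = K a x + K a y" by (rule K_char) (simp add: K_prop)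
lemma K_diff1[simp]: "K (x - y) v = K x v - K y v" by (rule K_char) (simp add: K_prop)
lemma K_diff2[simp]: "K a (x - y) = K a x - K a y" by (rule K_char) (simp add: K_prop)
lemma K_scale1[simp]: "K (r *\<^sub>R x) v = r *\<^sub>R K x v" by (rule K_char) (simp add: K_prop)
lemma K_scale2[simp]: "K a (r *\<^sub>R x) = r *\<^sub>R K a x" by (rule K_char) (simp add: K_prop)
lemma K_neg1[simp]: "K (- x) v = - K x v" by (rule K_char) (simp add: K_prop)
lemma K_neg2[simp]: "K a (- x) = - K a x" by (rule K_char) (simp add: K_prop)
lemma K_zero1[simp]: "K 0 v = 0" by (rule K_char) (simp add: K_prop)
lemma K_zero2[simp]: "K a 0 = 0" by (rule K_char) (simp add: K_prop)
lemma K_in_V[simp]: "K a v \<in> V"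
  unfolding orth_compl_def by (auto simp: K_prop C_br2)
lemma K_V: "x \<in> V \<Longrightarrow> K x v = 0"
  by (rule K_char) (simp add: V_B)
lemma K_K[simp]: "K (K a v) u = 0" by (rule K_V) simp
lemma K_br2[simp]: "K a (br u v) = 0" by (rule K_char) simp

end

context nil2 begin

lemma subspace_C: "subspace C"
  unfolding subspace_def center_def by simp
lemma subspace_V: "subspace V"
  unfolding subspace_def orth_compl_def by simp

lemma CV_sum_univ: "{x + y |x y. x \<in> C \<and> y \<in> V} = UNIV"
proof -
  have V_eq: "V = {y \<in> UNIV. \<forall>x \<in> RZ ` C. Linear_Algebra.orthogonal x y}"
    unfolding orth_compl_def Linear_Algebra.orthogonal_def by (auto simp: RZ_inner B_sym)
  have sRC: "subspace (RZ ` C)" by (rule linear_subspace_image[OF RZ_linear subspace_C])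
  have d1: "dim V + dim (RZ ` C) = dim (UNIV :: 'n set)"
    unfolding V_eq by (rule dim_subspace_orthogonal_to_vectors[OF sRC subspace_UNIV]) simp
  have d2: "dim (RZ ` C) = dim C"
    by (rule dim_image_eq[OF RZ_linear]) (use RZ_inj in \<open>simp add: inj_on_def inj_def\<close>)
  have CV: "C \<inter> V = {0}" using CV_zero subspace_0[OF subspace_C] subspace_0[OF subspace_V] by blast
  have d3: "dim {x + y |x y. x \<in> C \<and> y \<in> V} + dim (C \<inter> V) = dim C + dim V"
    by (rule dim_sums_Int[OF subspace_C subspace_V])
  have d0: "dim (C \<inter> V) = 0" unfolding CV by simp
  have "dim {x + y |x y. x \<in> C \<and> y \<in> V} = DIM('n)"
    using d1 d2 d3 d0 dim_UNIV[where 'a='n] by linarith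
  then have "span {x + y |x y. x \<in> C \<and> y \<in> V} = UNIV" by (simp add: dim_eq_full)
  moreover have "span {x + y |x y. x \<in> C \<and> y \<in> V} = {x + y |x y. x \<in> C \<and> y \<in> V}"
    by (rule span_eq_iff[THEN iffD2, OF subspace_sums[OF subspace_C subspace_V]])
  ultimately show ?thesis by simp
qed

lemma decomp: "\<exists>c. c \<in> C \<and> y - c \<in> V"
proof -
  have "y \<in> {x + y |x y. x \<in> C \<and> y \<in> V}" using CV_sum_univ by simp
  then obtain c v where "c \<in> C" "v \<in> V" "y = c + v" by blast
  then show ?thesis by (intro exI[of _ c]) simp
qed

lemma decomp_unique: "c \<in> C \<Longrightarrow> y - c \<in> V \<Longrightarrow> c' \<in> C \<Longrightarrow> y - c' \<in> V \<Longrightarrow> c = c'"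
proof -
  assume a: "c \<in> C" "y - c \<in> V" "c' \<in> C" "y - c' \<in> V"
  have "c' - c \<in> C" using a subspace_diff[OF subspace_C] by blast
  moreover have "c' - c \<in> V" using subspace_diff[OF subspace_V a(2) a(4)] by simp
  ultimately show "c = c'" using CV_zero by fastforce
qed

definition Pz :: "'n \<Rightarrow> 'n" where "Pz y = (THE c. c \<in> C \<and> y - c \<in> V)"

lemma Pz_prop: "Pz y \<in> C \<and> y - Pz y \<in> V"
proof -
  obtain c where c: "c \<in> C \<and> y - c \<in> V" using decomp by blast
  have "Pz y = c" unfolding Pz_def
    by (rule the_equality) (use c decomp_unique in blast)+
  then show ?thesis using c by simp
qed

lemma Pz_C[simp]: "Pz y \<in> C" and Pz_V[simp]: "y - Pz y \<in> V" using Pz_prop by auto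

lemma Pz_eq: "c \<in> C \<Longrightarrow> y - c \<in> V \<Longrightarrow> Pz y = c"
  using decomp_unique Pz_prop by blast

lemma Pz_add[simp]: "Pz (x + y) = Pz x + Pz y"
proof (rule Pz_eq)
  show "Pz x + Pz y \<in> C" by (rule subspace_add[OF subspace_C]) simp_all
  have "(x - Pz x) + (y - Pz y) \<in> V" by (rule subspace_add[OF subspace_V]) simp_all
  then show "x + y - (Pz x + Pz y) \<in> V" by (simp add: algebra_simps)
qed

lemma Pz_scale[simp]: "Pz (r *\<^sub>R x) = r *\<^sub>R Pz x"
proof (rule Pz_eq)
  show "r *\<^sub>R Pz x \<in> C" by (rule subspace_scale[OF subspace_C]) simp_all
  have "r *\<^sub>R (x - Pz x) \<in> V" by (rule subspace_scale[OF subspace_V]) simp_all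
  then show "r *\<^sub>R x - r *\<^sub>R Pz x \<in> V" by (simp add: algebra_simps)
qed

lemma Pz_linear: "linear Pz" by (rule linearI) simp_all
lemma Pz_diff[simp]: "Pz (x - y) = Pz x - Pz y" using linear_diff[OF Pz_linear] .
lemma Pz_neg[simp]: "Pz (- x) = - Pz x" using linear_neg[OF Pz_linear] .
lemma Pz_zero[simp]: "Pz 0 = 0" using linear_0[OF Pz_linear] .
lemma Pz_onC: "c \<in> C \<Longrightarrow> Pz c = c" by (rule Pz_eq) (simp_all add: subspace_0[OF subspace_V])
lemma Pz_onV: "v \<in> V \<Longrightarrow> Pz v = 0" by (rule Pz_eq) (simp_all add: subspace_0[OF subspace_C])
lemma Pz_br[simp]: "Pz (br x y) = br x y" by (rule Pz_onC) simp
lemma Pz_K[simp]: "Pz (K a v) = 0" by (rule Pz_onV) simp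
lemma K_Pz[simp]: "K (Pz y) v = K y v"
proof -
  have "K (y - Pz y) v = 0" by (rule K_V) simp
  then show ?thesis by simp
qed
lemma br_Pz2[simp]: "br x (Pz y) = 0" by (rule C_br2) simp
lemma br_Pz1[simp]: "br (Pz y) x = 0" by (rule C_br1) simp
lemma Pz_Pz[simp]: "Pz (Pz y) = Pz y" by (rule Pz_onC) simp

end

context nil2 begin

definition Phi :: "'n \<Rightarrow> 'n \<Rightarrow> 'n" where "Phi p v = v - (1/2) *\<^sub>R br p v"
definition Phinv :: "'n \<Rightarrow> 'n \<Rightarrow> 'n" where "Phinv p v = v + (1/2) *\<^sub>R br p v"
definition Gam :: "'n \<Rightarrow> 'n \<Rightarrow> 'n \<Rightarrow> 'n" where
  "Gam p v w = -(1/2) *\<^sub>R Phinv p (K (Phi p w) v + K (Phi p v) w)"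
definition dGam :: "'n \<Rightarrow> 'n \<Rightarrow> 'n \<Rightarrow> 'n \<Rightarrow> 'n" where
  "dGam p a v w = (1/4) *\<^sub>R Phinv p (K (br a w) v + K (br a v) w)
      - (1/4) *\<^sub>R br a (K (Phi p w) v + K (Phi p v) w)"

lemma Phi_Phinv[simp]: "Phi p (Phinv p v) = v" by (simp add: Phi_def Phinv_def)
lemma Phinv_Phi[simp]: "Phinv p (Phi p v) = v" by (simp add: Phi_def Phinv_def)

lemma Phi_add[simp]: "Phi p (x + y) = Phi p x + Phi p y" by (simp add: Phi_def algebra_simps)
lemma Phi_scale[simp]: "Phi p (r *\<^sub>R x) = r *\<^sub>R Phi p x" by (simp add: Phi_def algebra_simps)
lemma Phi_neg[simp]: "Phi p (- x) = - Phi p x" by (simp add: Phi_def algebra_simps)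

lemma metric_eq: "metric br B p v w = B (Phi p v) (Phi p w)"
  by (simp add: metric_def dLinv_def Phi_def)

lemma dmetric_eq: "dmetric br B p a v w =
    -(1/2) * B (br a v) (Phi p w) - (1/2) * B (Phi p v) (br a w)"
proof -
  define c0 where "c0 = B (Phi p v) (Phi p w)"
  define c1 where "c1 = -(1/2) * B (br a v) (Phi p w) - (1/2) * B (Phi p v) (br a w)"
  define c2 where "c2 = (1/4) * B (br a v) (br a w)"
  have eq: "(\<lambda>s. metric br B (p + s *\<^sub>R a) v w) = (\<lambda>s. c0 + s * c1 + s^2 * c2)"
    by (rule ext) (simp add: metric_def dLinv_def Phi_def c0_def c1_def c2_def algebra_simps power2_eq_square)
  have d: "((\<lambda>s. c0 + s * c1 + s^2 * c2) has_real_derivative c1) (at 0)"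
    by (auto intro!: derivative_eq_intros)
  have "dmetric br B p a v w = c1"
    unfolding dmetric_def eq
    by (rule the_equality[where P="\<lambda>d. ((\<lambda>s. c0 + s * c1 + s^2 * c2) has_real_derivative d) (at 0)"])
       (use d DERIV_unique in blast)+
  then show ?thesis by (simp add: c1_def)
qed

lemma metric_unique:
  assumes "\<And>z. metric br B p u z = metric br B p u' z" shows "u = u'"
proof -
  have "B (Phi p u) z' = B (Phi p u') z'" for z'
    using assms[of "Phinv p z'"] by (simp add: metric_eq)
  then have "Phi p u = Phi p u'" by (rule B_ext)
  then show ?thesis by (metis Phinv_Phi)
qed

lemma B_K_Phi: "B (K a v) (Phi p z) = B a (br v z)"
  by (simp add: K_prop Phi_def)

lemma christoffel_eq: "christoffel br B p v w = Gam p v w"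
proof -
  let ?P = "\<lambda>u. \<forall>z. metric br B p u z =
        (1/2) * (dmetric br B p v w z + dmetric br B p w v z - dmetric br B p z v w)"
  have PG: "?P (Gam p v w)"
  proof
    fix z
    have l: "metric br B p (Gam p v w) z = -(1/2) * (B (Phi p w) (br v z) + B (Phi p v) (br w z))"
      by (simp add: metric_eq Gam_def B_K_Phi algebra_simps)
    have a1: "B (br v w) (Phi p z) = - B (br w v) (Phi p z)" using br_anti[of v w] by simp
    have a2: "B (br z v) (Phi p w) = - B (Phi p w) (br v z)" using br_anti[of z v] B_sym by simp
    have a3: "B (Phi p v) (br z w) = - B (Phi p v) (br w z)" using br_anti[of z w] by simp
    show "metric br B p (Gam p v w) z =
        (1/2) * (dmetric br B p v w z + dmetric br B p w v z - dmetric br B p z v w)"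
      unfolding l dmetric_eq a1 a2 a3 by (simp add: field_simps)
  qed
  show ?thesis unfolding christoffel_def
  proof (rule the_equality[where P="?P"])
    show "?P (Gam p v w)" by (rule PG)
    fix u assume "?P u"
    then show "u = Gam p v w" using PG by (intro metric_unique[of p]) metis
  qed
qed

lemma Gam_shift: "Gam (p + s *\<^sub>R a) v w = Gam p v w + s *\<^sub>R dGam p a v w
     + (s^2) *\<^sub>R ((1/8) *\<^sub>R br a (K (br a w) v + K (br a v) w))"
  by (simp add: Gam_def dGam_def Phi_def Phinv_def algebra_simps power2_eq_square)

lemma dchristoffel_eq: "dchristoffel br B p a v w = dGam p a v w"
proof -
  define G0 where "G0 = Gam p v w"
  define D1 where "D1 = dGam p a v w"
  define D2 where "D2 = (1/8) *\<^sub>R br a (K (br a w) v + K (br a v) w)"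
  have eq: "(\<lambda>s. christoffel br B (p + s *\<^sub>R a) v w) = (\<lambda>s. G0 + s *\<^sub>R D1 + (s^2) *\<^sub>R D2)"
    by (rule ext) (simp add: christoffel_eq Gam_shift G0_def D1_def D2_def)
  have d: "((\<lambda>s. G0 + s *\<^sub>R D1 + (s^2) *\<^sub>R D2) has_vector_derivative D1) (at 0)"
    by (auto intro!: derivative_eq_intros)
  have "dchristoffel br B p a v w = D1"
    unfolding dchristoffel_def eq
    by (rule the_equality[where P="\<lambda>d. ((\<lambda>s. G0 + s *\<^sub>R D1 + (s^2) *\<^sub>R D2) has_vector_derivative d) (at 0)"])
       (use d vector_derivative_unique_at in blast)+
  then show ?thesis by (simp add: D1_def)
qed

end


lemma deriv0_const:
  fixes f :: "real \<Rightarrow> 'a::real_normed_vector"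
  assumes "is_interval I" "\<And>t. t \<in> I \<Longrightarrow> (f has_vector_derivative 0) (at t)" "s \<in> I" "t \<in> I"
  shows "f s = f t"
proof -
  obtain c where "\<And>x. x \<in> I \<Longrightarrow> f x = c"
    using has_vector_derivative_zero_constant[OF is_interval_convex[OF assms(1)]]
      assms(2) has_vector_derivative_at_within by metis
  then show ?thesis using assms by metis
qed

lemma vd_scale:
  "(g has_vector_derivative g') F \<Longrightarrow> ((\<lambda>x. c *\<^sub>R g x) has_vector_derivative c *\<^sub>R g') F"
  by (rule bounded_linear.has_vector_derivative[OF bounded_linear_scaleR_right])

lemma line_vd: "((\<lambda>t. t *\<^sub>R x) has_vector_derivative x) (at t)"
  by (auto intro!: derivative_eq_intros)

context nil2 begin

lemma Phinv_add[simp]: "Phinv p (x + y) = Phinv p x + Phinv p y" by (simp add: Phinv_def algebra_simps)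
lemma Phinv_scale[simp]: "Phinv p (r *\<^sub>R x) = r *\<^sub>R Phinv p x" by (simp add: Phinv_def algebra_simps)
lemma Phinv_neg[simp]: "Phinv p (- x) = - Phinv p x" by (simp add: Phinv_def algebra_simps)
lemma Phinv_zero[simp]: "Phinv p 0 = 0" by (simp add: Phinv_def)
lemma Phi_zero[simp]: "Phi p 0 = 0" by (simp add: Phi_def)

lemma br_bb: "bounded_bilinear br" using br_bil bilinear_conv_bounded_bilinear by blast
lemma B_bb: "bounded_bilinear B" using B_bil bilinear_conv_bounded_bilinear by blast

lemma br_vd:
  assumes "(f has_vector_derivative f') (at t)" "(g has_vector_derivative g') (at t)"
  shows "((\<lambda>x. br (f x) (g x)) has_vector_derivative (br (f t) g' + br f' (g t))) (at t)"
  using bounded_bilinear.has_vector_derivative[OF br_bb assms] .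

lemma B_vd:
  assumes "(f has_vector_derivative f') (at t)" "(g has_vector_derivative g') (at t)"
  shows "((\<lambda>x. B (f x) (g x)) has_vector_derivative (B (f t) g' + B f' (g t))) (at t)"
  using bounded_bilinear.has_vector_derivative[OF B_bb assms] .

lemma Phi_Gam_diag: "Phi p (Gam p u u) = - K (Phi p u) u"
  by (simp add: Gam_def)

lemma geodesic_line:
  assumes I: "is_interval I" "open I" "0 \<in> I" and geo: "geodesic_on br B I \<gamma>"
    and g0: "\<gamma> 0 = 0" and v0: "vel \<gamma> 0 = x0" and x0: "x0 \<in> V"
  shows "\<And>t. t \<in> I \<Longrightarrow> \<gamma> t = t *\<^sub>R x0"
proof -
  define v where "v = vel \<gamma>"
  have gd: "(\<gamma> has_vector_derivative v t) (at t)" if "t \<in> I" for t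
    using geo that unfolding geodesic_on_def v_def vel_def
    by (simp add: vector_derivative_works[symmetric])
  obtain A where vd: "\<And>t. t \<in> I \<Longrightarrow> (v has_vector_derivative A t) (at t)"
      and Aeq: "\<And>t. t \<in> I \<Longrightarrow> A t + Gam (\<gamma> t) (v t) (v t) = 0"
    using geo unfolding geodesic_on_def v_def christoffel_eq by metis
  define e where "e t = Phi (\<gamma> t) (v t)" for t
  have ed: "(e has_vector_derivative K (e t) (v t)) (at t)" if "t \<in> I" for t
  proof -
    have "((\<lambda>t. v t - (1/2) *\<^sub>R br (\<gamma> t) (v t)) has_vector_derivative
            A t - (1/2) *\<^sub>R (br (\<gamma> t) (A t) + br (v t) (v t))) (at t)"
      by (intro has_vector_derivative_diff vd_scale br_vd gd vd that)
    moreover have "A t - (1/2) *\<^sub>R (br (\<gamma> t) (A t) + br (v t) (v t)) = K (e t) (v t)"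
    proof -
      have "A t = - Gam (\<gamma> t) (v t) (v t)" using Aeq[OF that] by (simp add: eq_neg_iff_add_eq_0)
      then have "A t - (1/2) *\<^sub>R (br (\<gamma> t) (A t) + br (v t) (v t)) = Phi (\<gamma> t) (- Gam (\<gamma> t) (v t) (v t))"
        by (simp add: Phi_def)
      also have "\<dots> = K (e t) (v t)" by (simp only: Phi_neg Phi_Gam_diag e_def) simp
      finally show ?thesis .
    qed
    ultimately show ?thesis unfolding e_def Phi_def by simp
  qed
  have e0: "e 0 = x0" by (simp add: e_def g0 v0[folded v_def] Phi_def)
  have eV: "e t \<in> V" if "t \<in> I" for t
  proof -
    have "B (e t) c = 0" if c: "c \<in> C" for c
    proof -
      have "B (e t) c = B (e 0) c"
      proof (rule deriv0_const[OF I(1) _ \<open>t \<in> I\<close> I(3)])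
        fix s assume s: "s \<in> I"
        have "((\<lambda>s. B (e s) c) has_vector_derivative (B (e s) 0 + B (K (e s) (v s)) c)) (at s)"
          by (intro B_vd ed s derivative_intros)
        moreover have "B (e s) 0 + B (K (e s) (v s)) c = 0" by (simp add: K_prop C_br2[OF c])
        ultimately show "((\<lambda>s. B (e s) c) has_vector_derivative 0) (at s)" by simp
      qed
      also have "\<dots> = 0" using e0 x0 c V_B by simp
      finally show ?thesis .
    qed
    then show ?thesis unfolding orth_compl_def by auto
  qed
  have econst: "e t = x0" if "t \<in> I" for t
  proof -
    have "e t = e 0"
    proof (rule deriv0_const[OF I(1) _ \<open>t \<in> I\<close> I(3)])
      fix s assume s: "s \<in> I"
      have "K (e s) (v s) = 0"
        by (rule K_V[OF eV[OF s]])
      then show "(e has_vector_derivative 0) (at s)" using ed[OF s] by simp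
    qed
    then show ?thesis using e0 by simp
  qed
  have vform: "v t = x0 + (1/2) *\<^sub>R br (\<gamma> t) x0" if "t \<in> I" for t
  proof -
    have "v t = Phinv (\<gamma> t) (e t)" by (simp add: e_def)
    then show ?thesis using econst[OF that] by (simp add: Phinv_def)
  qed
  define \<delta> where "\<delta> t = \<gamma> t - t *\<^sub>R x0" for t
  have dd: "(\<delta> has_vector_derivative (1/2) *\<^sub>R br (\<delta> t) x0) (at t)" if "t \<in> I" for t
  proof -
    have "(\<delta> has_vector_derivative v t - x0) (at t)"
      unfolding \<delta>_def by (rule has_vector_derivative_diff[OF gd[OF that] line_vd])
    moreover have "v t - x0 = (1/2) *\<^sub>R br (\<delta> t) x0" using vform[OF that] by (simp add: \<delta>_def)
    ultimately show ?thesis by simp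
  qed
  have brd: "br (\<delta> t) x0 = 0" if "t \<in> I" for t
  proof -
    have "br (\<delta> t) x0 = br (\<delta> 0) x0"
    proof (rule deriv0_const[OF I(1) _ \<open>t \<in> I\<close> I(3)])
      fix s assume s: "s \<in> I"
      have "((\<lambda>s. br (\<delta> s) x0) has_vector_derivative (br (\<delta> s) 0 + br ((1/2) *\<^sub>R br (\<delta> s) x0) x0)) (at s)"
        by (intro br_vd dd s derivative_intros)
      then show "((\<lambda>s. br (\<delta> s) x0) has_vector_derivative 0) (at s)" by simp
    qed
    then show ?thesis by (simp add: \<delta>_def g0)
  qed
  fix t assume t: "t \<in> I"
  have "\<delta> t = \<delta> 0"
  proof (rule deriv0_const[OF I(1) _ t I(3)])
    fix s assume s: "s \<in> I"
    show "(\<delta> has_vector_derivative 0) (at s)" using dd[OF s] brd[OF s] by simp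
  qed
  then show "\<gamma> t = t *\<^sub>R x0" by (simp add: \<delta>_def g0)
qed

lemma Gam_line: "x0 \<in> V \<Longrightarrow> Gam (t *\<^sub>R x0) x0 x0 = 0"
  by (simp add: Gam_def Phi_def K_V)

lemma vel_line: "vel (\<lambda>t. t *\<^sub>R x0) t = x0"
  unfolding vel_def by (rule vector_derivative_at) (auto intro!: derivative_eq_intros)

lemma geodesic_line_is: "x0 \<in> V \<Longrightarrow> geodesic_on br B I (\<lambda>t. t *\<^sub>R x0)"
  unfolding geodesic_on_def vel_line christoffel_eq
  by (auto simp: Gam_line intro!: derivative_eq_intros)

end

context nil2 begin

definition m1 :: "'n \<Rightarrow> 'n \<Rightarrow> 'n" where "m1 x0 y = (1/2) *\<^sub>R (br x0 (K y x0) - K (br x0 y) x0)"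
definition m2 :: "'n \<Rightarrow> 'n \<Rightarrow> 'n" where "m2 x0 y = -(1/4) *\<^sub>R br x0 (K (br x0 y) x0)"
definition M :: "'n \<Rightarrow> real \<Rightarrow> 'n \<Rightarrow> 'n" where
  "M x0 s y = K y x0 + s *\<^sub>R m1 x0 y + (s^2) *\<^sub>R m2 x0 y"
definition Rt :: "'n \<Rightarrow> real \<Rightarrow> 'n \<Rightarrow> 'n" where
  "Rt x0 s y = -(3/4) *\<^sub>R K (br x0 y) x0 + (1/4) *\<^sub>R br x0 (K y x0) - (s/2) *\<^sub>R br x0 (K (br x0 y) x0)"

lemma Gam_sym: "Gam p v w = Gam p w v" by (simp add: Gam_def add.commute)

lemma Gam_x0: "x0 \<in> V \<Longrightarrow> Gam (t *\<^sub>R x0) x0 y = -(1/2) *\<^sub>R M x0 t y"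
  by (simp add: Gam_def Phi_def Phinv_def M_def m1_def m2_def K_V algebra_simps power2_eq_square)

lemma curv_x0: assumes "x0 \<in> V" shows "curv br B (t *\<^sub>R x0) y x0 x0 = Rt x0 t y"
proof -
  have s: "br y x0 = - br x0 y" by (rule br_anti)
  have g0: "Gam (t *\<^sub>R x0) x0 x0 = 0" using Gam_line[OF assms] .
  have gy: "Gam (t *\<^sub>R x0) y x0 = -(1/2) *\<^sub>R M x0 t y" using Gam_x0[OF assms] Gam_sym by metis
  have gz: "Gam p y 0 = 0" for p by (simp add: Gam_def)
  have "curv br B (t *\<^sub>R x0) y x0 x0 = dGam (t *\<^sub>R x0) y x0 x0 - dGam (t *\<^sub>R x0) x0 y x0
      - Gam (t *\<^sub>R x0) x0 (-(1/2) *\<^sub>R M x0 t y)"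
    unfolding curv_def dchristoffel_eq christoffel_eq g0 gy gz by simp
  also have "\<dots> = Rt x0 t y"
    unfolding Gam_x0[OF assms]
    by (simp add: dGam_def Phi_def Phinv_def M_def m1_def m2_def Rt_def K_V[OF assms] s algebra_simps power2_eq_square)
       (rule euclidean_eqI; simp add: inner_simps field_simps)
  finally show ?thesis .
qed

end

context nil2 begin

lemma bl_a: "bounded_linear (\<lambda>y. K y x0)"
  by (simp add: linear_conv_bounded_linear[symmetric] linearI)
lemma bl_m1: "bounded_linear (m1 x0)"
  by (simp add: linear_conv_bounded_linear[symmetric] linearI m1_def algebra_simps)
lemma bl_m2: "bounded_linear (m2 x0)"
  by (simp add: linear_conv_bounded_linear[symmetric] linearI m2_def algebra_simps)

lemma M_vd: assumes "(Y has_vector_derivative Y1) (at t)"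
  shows "((\<lambda>s. M x0 s (Y s)) has_vector_derivative
           (M x0 t Y1 + m1 x0 (Y t) + (2*t) *\<^sub>R m2 x0 (Y t))) (at t)"
proof -
  have l0: "((\<lambda>s. K (Y s) x0) has_vector_derivative K Y1 x0) (at t)"
    by (rule bounded_linear.has_vector_derivative[OF bl_a assms])
  have l1: "((\<lambda>s. m1 x0 (Y s)) has_vector_derivative m1 x0 Y1) (at t)"
    by (rule bounded_linear.has_vector_derivative[OF bl_m1 assms])
  have l2: "((\<lambda>s. m2 x0 (Y s)) has_vector_derivative m2 x0 Y1) (at t)"
    by (rule bounded_linear.has_vector_derivative[OF bl_m2 assms])
  have "((\<lambda>s. K (Y s) x0 + s *\<^sub>R m1 x0 (Y s) + (s^2) *\<^sub>R m2 x0 (Y s)) has_vector_derivative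
           (K Y1 x0 + (t *\<^sub>R m1 x0 Y1 + 1 *\<^sub>R m1 x0 (Y t)) + (t^2 *\<^sub>R m2 x0 Y1 + (2*t) *\<^sub>R m2 x0 (Y t)))) (at t)"
    by (intro has_vector_derivative_add has_vector_derivative_scaleR l0 l1 l2)
       (auto intro!: derivative_eq_intros)
  then show ?thesis unfolding M_def by (simp add: algebra_simps)
qed

lemma jacobi_iff:
  assumes x0: "x0 \<in> V" and I: "open I"
    and d1: "\<And>t. t \<in> I \<Longrightarrow> (Y has_vector_derivative Y1 t) (at t)"
    and d2: "\<And>t. t \<in> I \<Longrightarrow> (Y1 has_vector_derivative Y2 t) (at t)"
  shows "jacobi_on br B I (\<lambda>t. t *\<^sub>R x0) Y \<longleftrightarrow>
     (\<forall>t\<in>I. Y2 t = M x0 t (Y1 t) + (1/2) *\<^sub>R K (br x0 (Y t)) x0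
                     + (t/4) *\<^sub>R br x0 (K (br x0 (Y t)) x0))"
proof -
  let ?g = "\<lambda>t. t *\<^sub>R x0"
  have cov: "covder br B ?g Y s = Y1 s - (1/2) *\<^sub>R M x0 s (Y s)" if "s \<in> I" for s
    unfolding covder_def vel_line christoffel_eq Gam_x0[OF x0] vel_def
      vector_derivative_at[OF d1[OF that]] by simp
  define D where "D t = Y2 t - (1/2) *\<^sub>R (M x0 t (Y1 t) + m1 x0 (Y t) + (2*t) *\<^sub>R m2 x0 (Y t))" for t
  have covd: "(covder br B ?g Y has_vector_derivative D t) (at t)" if "t \<in> I" for t
  proof -
    have "((\<lambda>s. Y1 s - (1/2) *\<^sub>R M x0 s (Y s)) has_vector_derivative D t) (at t)"
      unfolding D_def by (intro has_vector_derivative_diff vd_scale M_vd d1 d2 that)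
    then show ?thesis
      by (rule has_vector_derivative_transform_within_open[OF _ I that]) (simp add: cov)
  qed
  have cc: "covder br B ?g (covder br B ?g Y) t =
      D t - (1/2) *\<^sub>R M x0 t (Y1 t - (1/2) *\<^sub>R M x0 t (Y t))" if "t \<in> I" for t
    unfolding covder_def[of br B ?g "covder br B ?g Y" t] vel_line christoffel_eq Gam_x0[OF x0]
      vel_def vector_derivative_at[OF covd[OF that]] cov[OF that] by simp
  have alg: "D t - (1/2) *\<^sub>R M x0 t (Y1 t - (1/2) *\<^sub>R M x0 t (Y t)) + Rt x0 t (Y t) =
      Y2 t - (M x0 t (Y1 t) + (1/2) *\<^sub>R K (br x0 (Y t)) x0 + (t/4) *\<^sub>R br x0 (K (br x0 (Y t)) x0))" for t
    by (simp add: D_def M_def m1_def m2_def Rt_def algebra_simps power2_eq_square)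
       (rule euclidean_eqI; simp add: inner_simps field_simps)
  have "jacobi_on br B I ?g Y \<longleftrightarrow>
     (\<forall>t\<in>I. covder br B ?g (covder br B ?g Y) t + curv br B (?g t) (Y t) x0 x0 = 0)"
  proof -
    have dd: "\<forall>t\<in>I. Y differentiable (at t) \<and> covder br B ?g Y differentiable (at t)"
      using differentiableI_vector d1 covd by blast
    show ?thesis unfolding jacobi_on_def vel_line using dd by blast
  qed
  also have "\<dots> \<longleftrightarrow> (\<forall>t\<in>I. Y2 t = M x0 t (Y1 t) + (1/2) *\<^sub>R K (br x0 (Y t)) x0
                     + (t/4) *\<^sub>R br x0 (K (br x0 (Y t)) x0))"
  proof -
    have "(covder br B ?g (covder br B ?g Y) t + curv br B (?g t) (Y t) x0 x0 = 0) \<longleftrightarrow>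
       (Y2 t = M x0 t (Y1 t) + (1/2) *\<^sub>R K (br x0 (Y t)) x0 + (t/4) *\<^sub>R br x0 (K (br x0 (Y t)) x0))"
      if t: "t \<in> I" for t
    proof -
      have "covder br B ?g (covder br B ?g Y) t + curv br B (?g t) (Y t) x0 x0 =
        Y2 t - (M x0 t (Y1 t) + (1/2) *\<^sub>R K (br x0 (Y t)) x0 + (t/4) *\<^sub>R br x0 (K (br x0 (Y t)) x0))"
        unfolding cc[OF t] curv_x0[OF x0] alg ..
      then show ?thesis by simp
    qed
    then show ?thesis by blast
  qed
  finally show ?thesis .
qed

lemma jacobi_regular:
  assumes x0: "x0 \<in> V" and I: "open I" and J: "jacobi_on br B I (\<lambda>t. t *\<^sub>R x0) Y" and t: "t \<in> I"
  shows "(Y has_vector_derivative vel Y t) (at t) \<and> (vel Y has_vector_derivative vel (vel Y) t) (at t)"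
proof -
  let ?g = "\<lambda>t. t *\<^sub>R x0"
  have dY: "(Y has_vector_derivative vel Y s) (at s)" if "s \<in> I" for s
    using J that unfolding jacobi_on_def vel_def by (simp add: vector_derivative_works[symmetric])
  have dC: "(covder br B ?g Y has_vector_derivative vel (covder br B ?g Y) s) (at s)" if "s \<in> I" for s
    using J that unfolding jacobi_on_def vel_def by (simp add: vector_derivative_works[symmetric])
  have eq: "vel Y s = covder br B ?g Y s + (1/2) *\<^sub>R M x0 s (Y s)" for s
    unfolding covder_def vel_line christoffel_eq Gam_x0[OF x0] by simp
  have "((\<lambda>s. covder br B ?g Y s + (1/2) *\<^sub>R M x0 s (Y s)) has_vector_derivative
      (vel (covder br B ?g Y) t + (1/2) *\<^sub>R (M x0 t (vel Y t) + m1 x0 (Y t) + (2*t) *\<^sub>R m2 x0 (Y t)))) (at t)"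
    by (intro has_vector_derivative_add vd_scale M_vd dY dC t)
  then have "(vel Y has_vector_derivative
      (vel (covder br B ?g Y) t + (1/2) *\<^sub>R (M x0 t (vel Y t) + m1 x0 (Y t) + (2*t) *\<^sub>R m2 x0 (Y t)))) (at t)"
    unfolding eq[symmetric] by simp
  then show ?thesis using dY[OF t] vector_derivative_at unfolding vel_def by metis
qed

end

context nil2 begin

lemma bl_d: "bounded_linear (br x0)"
  using br_lin2 linear_conv_bounded_linear by blast
lemma bl_Pz: "bounded_linear Pz"
  using Pz_linear linear_conv_bounded_linear by blast

lemma vd_d: "(f has_vector_derivative f') (at t) \<Longrightarrow> ((\<lambda>s. br x0 (f s)) has_vector_derivative br x0 f') (at t)"
  by (rule bounded_linear.has_vector_derivative[OF bl_d])
lemma vd_Pz: "(f has_vector_derivative f') (at t) \<Longrightarrow> ((\<lambda>s. Pz (f s)) has_vector_derivative Pz f') (at t)"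
  by (rule bounded_linear.has_vector_derivative[OF bl_Pz])
lemma vd_a: "(f has_vector_derivative f') (at t) \<Longrightarrow> ((\<lambda>s. K (f s) x0) has_vector_derivative K f' x0) (at t)"
  by (rule bounded_linear.has_vector_derivative[OF bl_a])

lemma vd_lin_t:
  "(f has_vector_derivative f') (at t) \<Longrightarrow>
    ((\<lambda>s. (k * s) *\<^sub>R f s) has_vector_derivative ((k * t) *\<^sub>R f' + k *\<^sub>R f t)) (at t)"
  by (auto intro!: derivative_eq_intros)

lemma jacobi_solve:
  assumes x0: "x0 \<in> V" and I: "is_interval I" "open I" "0 \<in> I"
    and d1: "\<And>t. t \<in> I \<Longrightarrow> (Y has_vector_derivative Y1 t) (at t)"
    and d2: "\<And>t. t \<in> I \<Longrightarrow> (Y1 has_vector_derivative Y2 t) (at t)"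
    and ode: "\<And>t. t \<in> I \<Longrightarrow> Y2 t = M x0 t (Y1 t) + (1/2) *\<^sub>R K (br x0 (Y t)) x0
                     + (t/4) *\<^sub>R br x0 (K (br x0 (Y t)) x0)"
    and Y0: "Y 0 = 0"
  obtains c u1 where "c \<in> C" "u1 \<in> V"
    "\<And>t. t \<in> I \<Longrightarrow> Y t - (t/2) *\<^sub>R br x0 (Y t) =
        (t *\<^sub>R u1 + (t^2/2) *\<^sub>R K c x0)
      + (t *\<^sub>R c - (t^2/2) *\<^sub>R br x0 u1 - (t^3/6) *\<^sub>R br x0 (K c x0))"
proof -
  define y where "y t = Y t - (t/2) *\<^sub>R br x0 (Y t)" for t
  define y1 where "y1 t = Y1 t - (1/2) *\<^sub>R br x0 (Y t) - (t/2) *\<^sub>R br x0 (Y1 t)" for t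
  define y2 where "y2 t = Y2 t - br x0 (Y1 t) - (t/2) *\<^sub>R br x0 (Y2 t)" for t
  have yd: "(y has_vector_derivative y1 t) (at t)" if "t \<in> I" for t
  proof -
    have "((\<lambda>s. Y s - ((1/2) * s) *\<^sub>R br x0 (Y s)) has_vector_derivative
        (Y1 t - (((1/2) * t) *\<^sub>R br x0 (Y1 t) + (1/2) *\<^sub>R br x0 (Y t)))) (at t)"
      by (intro has_vector_derivative_diff vd_lin_t vd_d d1 that)
    then show ?thesis unfolding y_def y1_def by (simp add: algebra_simps)
  qed
  have y1d: "(y1 has_vector_derivative y2 t) (at t)" if "t \<in> I" for t
  proof -
    have "((\<lambda>s. Y1 s - (1/2) *\<^sub>R br x0 (Y s) - ((1/2) * s) *\<^sub>R br x0 (Y1 s)) has_vector_derivative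
        (Y2 t - (1/2) *\<^sub>R br x0 (Y1 t) - (((1/2) * t) *\<^sub>R br x0 (Y2 t) + (1/2) *\<^sub>R br x0 (Y1 t)))) (at t)"
      by (intro has_vector_derivative_diff vd_lin_t vd_scale vd_d d1 d2 that)
    moreover have "(\<lambda>s. Y1 s - (1/2) *\<^sub>R br x0 (Y s) - ((1/2) * s) *\<^sub>R br x0 (Y1 s)) = y1"
      by (rule ext) (simp add: y1_def)
    moreover have "Y2 t - (1/2) *\<^sub>R br x0 (Y1 t) - (((1/2) * t) *\<^sub>R br x0 (Y2 t) + (1/2) *\<^sub>R br x0 (Y1 t)) = y2 t"
      unfolding y2_def by (rule euclidean_eqI) (simp add: inner_simps field_simps)
    ultimately show ?thesis by simp
  qed
  have dY: "br x0 (y t) = br x0 (Y t)" for t by (simp add: y_def)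
  have y2eq: "y2 t = K (y1 t) x0 - br x0 (y1 t) + K (br x0 (y t)) x0" if "t \<in> I" for t
    unfolding y2_def ode[OF that]
    by (simp add: y1_def y_def M_def m1_def m2_def algebra_simps power2_eq_square)
       (rule euclidean_eqI; simp add: inner_simps field_simps)
  define c where "c = Pz (y1 0) + br x0 (y 0)"
  have cconst: "Pz (y1 t) + br x0 (y t) = c" if "t \<in> I" for t
    unfolding c_def
  proof (rule deriv0_const[OF I(1) _ that I(3)])
    fix s assume s: "s \<in> I"
    have "((\<lambda>s. Pz (y1 s) + br x0 (y s)) has_vector_derivative Pz (y2 s) + br x0 (y1 s)) (at s)"
      by (intro has_vector_derivative_add vd_Pz vd_d y1d yd s)
    moreover have "Pz (y2 s) + br x0 (y1 s) = 0" by (simp add: y2eq[OF s])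
    ultimately show "((\<lambda>s. Pz (y1 s) + br x0 (y s)) has_vector_derivative 0) (at s)" by simp
  qed
  have cC: "c \<in> C" unfolding c_def by (rule subspace_add[OF subspace_C]) simp_all
  have y0: "y 0 = 0" by (simp add: y_def Y0)
  define u1 where "u1 = y1 0 - Pz (y1 0)"
  have u1V: "u1 \<in> V" unfolding u1_def by simp
  have ac: "K c x0 = K (y1 t) x0 + K (br x0 (y t)) x0" if "t \<in> I" for t
    using cconst[OF that, symmetric] by simp
  have u1eq: "y1 t - Pz (y1 t) - t *\<^sub>R K c x0 = u1" if "t \<in> I" for t
  proof -
    have "y1 t - Pz (y1 t) - (1 * t) *\<^sub>R K c x0 = y1 0 - Pz (y1 0) - (1 * 0) *\<^sub>R K c x0"
    proof (rule deriv0_const[OF I(1) _ that I(3)])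
      fix s assume s: "s \<in> I"
      have "((\<lambda>s. y1 s - Pz (y1 s) - (1 * s) *\<^sub>R K c x0) has_vector_derivative
          y2 s - Pz (y2 s) - ((1 * s) *\<^sub>R 0 + 1 *\<^sub>R K c x0)) (at s)"
        by (intro has_vector_derivative_diff vd_lin_t vd_Pz y1d s has_vector_derivative_const)
      moreover have "y2 s - Pz (y2 s) - ((1 * s) *\<^sub>R 0 + 1 *\<^sub>R K c x0) = 0"
        by (simp add: y2eq[OF s] ac[OF s])
      ultimately show "((\<lambda>s. y1 s - Pz (y1 s) - (1 * s) *\<^sub>R K c x0) has_vector_derivative 0) (at s)"
        by simp
    qed
    then show ?thesis by (simp add: u1_def)
  qed
  have ueq: "y t - Pz (y t) = t *\<^sub>R u1 + (t^2/2) *\<^sub>R K c x0" if "t \<in> I" for t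
  proof -
    have "y t - Pz (y t) - (t *\<^sub>R u1 + (t^2/2) *\<^sub>R K c x0) =
          y 0 - Pz (y 0) - (0 *\<^sub>R u1 + (0^2/2) *\<^sub>R K c x0)"
    proof (rule deriv0_const[OF I(1) _ that I(3)])
      fix s assume s: "s \<in> I"
      have "((\<lambda>s. y s - Pz (y s) - (s *\<^sub>R u1 + (s^2/2) *\<^sub>R K c x0)) has_vector_derivative
          y1 s - Pz (y1 s) - (u1 + s *\<^sub>R K c x0)) (at s)"
        by (auto intro!: derivative_eq_intros vd_Pz yd s)
      moreover have "y1 s - Pz (y1 s) - (u1 + s *\<^sub>R K c x0) = 0"
        using u1eq[OF s] by (simp add: algebra_simps)
      ultimately show "((\<lambda>s. y s - Pz (y s) - (s *\<^sub>R u1 + (s^2/2) *\<^sub>R K c x0)) has_vector_derivative 0) (at s)"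
        by simp
    qed
    then show ?thesis by (simp add: y0)
  qed
  have weq: "Pz (y t) = t *\<^sub>R c - (t^2/2) *\<^sub>R br x0 u1 - (t^3/6) *\<^sub>R br x0 (K c x0)" if "t \<in> I" for t
  proof -
    have "Pz (y t) - (t *\<^sub>R c - (t^2/2) *\<^sub>R br x0 u1 - (t^3/6) *\<^sub>R br x0 (K c x0)) =
          Pz (y 0) - (0 *\<^sub>R c - (0^2/2) *\<^sub>R br x0 u1 - (0^3/6) *\<^sub>R br x0 (K c x0))"
    proof (rule deriv0_const[OF I(1) _ that I(3)])
      fix s assume s: "s \<in> I"
      have "((\<lambda>s. Pz (y s) - (s *\<^sub>R c - (s^2/2) *\<^sub>R br x0 u1 - (s^3/6) *\<^sub>R br x0 (K c x0))) has_vector_derivative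
          Pz (y1 s) - (c - s *\<^sub>R br x0 u1 - (s^2/2) *\<^sub>R br x0 (K c x0))) (at s)"
        by (auto intro!: derivative_eq_intros vd_Pz yd s)
      moreover have "Pz (y1 s) - (c - s *\<^sub>R br x0 u1 - (s^2/2) *\<^sub>R br x0 (K c x0)) = 0"
      proof -
        have "br x0 (y s) = br x0 (y s - Pz (y s))" by simp
        also have "\<dots> = s *\<^sub>R br x0 u1 + (s^2/2) *\<^sub>R br x0 (K c x0)" by (simp add: ueq[OF s])
        finally show ?thesis using cconst[OF s] by (simp add: algebra_simps)
      qed
      ultimately show "((\<lambda>s. Pz (y s) - (s *\<^sub>R c - (s^2/2) *\<^sub>R br x0 u1 - (s^3/6) *\<^sub>R br x0 (K c x0))) has_vector_derivative 0) (at s)"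
        by simp
    qed
    then show ?thesis by (simp add: y0)
  qed
  show ?thesis
  proof (rule that[OF cC u1V])
    fix t assume t: "t \<in> I"
    have "y t = (y t - Pz (y t)) + Pz (y t)" by simp
    also have "\<dots> = (t *\<^sub>R u1 + (t^2/2) *\<^sub>R K c x0)
      + (t *\<^sub>R c - (t^2/2) *\<^sub>R br x0 u1 - (t^3/6) *\<^sub>R br x0 (K c x0))"
      by (rule arg_cong2[where f="(+)", OF ueq[OF t] weq[OF t]])
    finally show "Y t - (t/2) *\<^sub>R br x0 (Y t) = (t *\<^sub>R u1 + (t^2/2) *\<^sub>R K c x0)
      + (t *\<^sub>R c - (t^2/2) *\<^sub>R br x0 u1 - (t^3/6) *\<^sub>R br x0 (K c x0))"
      unfolding y_def .
  qed
qed

end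


lemma hvd_cong:
  assumes "open I" "s \<in> I" "\<And>t. t \<in> I \<Longrightarrow> f t = g t"
  shows "(f has_vector_derivative D) (at s) \<longleftrightarrow> (g has_vector_derivative D) (at s)"
proof
  assume "(f has_vector_derivative D) (at s)"
  then show "(g has_vector_derivative D) (at s)"
    by (rule has_vector_derivative_transform_within_open[OF _ assms(1,2)]) (simp add: assms(3))
next
  assume "(g has_vector_derivative D) (at s)"
  then show "(f has_vector_derivative D) (at s)"
    by (rule has_vector_derivative_transform_within_open[OF _ assms(1,2)]) (simp add: assms(3))
qed

lemma vel_cong:
  assumes "open I" "s \<in> I" "\<And>t. t \<in> I \<Longrightarrow> f t = g t"
  shows "vel f s = vel g s"
proof -
  have "(\<lambda>D. (f has_vector_derivative D) (at s)) = (\<lambda>D. (g has_vector_derivative D) (at s))"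
    using hvd_cong[of I s f g, OF assms] by auto
  then show ?thesis unfolding vel_def vector_derivative_def by simp
qed

lemma diff_cong:
  fixes f g :: "real \<Rightarrow> 'a::real_normed_vector"
  assumes "open I" "s \<in> I" "\<And>t. t \<in> I \<Longrightarrow> f t = g t"
  shows "f differentiable (at s) \<longleftrightarrow> g differentiable (at s)"
proof
  assume "f differentiable (at s)"
  then have "(f has_vector_derivative vector_derivative f (at s)) (at s)"
    using vector_derivative_works by blast
  then have "(g has_vector_derivative vector_derivative f (at s)) (at s)"
    using hvd_cong[of I s f g, OF assms] by blast
  then show "g differentiable (at s)" by (rule differentiableI_vector)
next
  assume "g differentiable (at s)"
  then have "(g has_vector_derivative vector_derivative g (at s)) (at s)"
    using vector_derivative_works by blast
  then have "(f has_vector_derivative vector_derivative g (at s)) (at s)"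
    using hvd_cong[of I s f g, OF assms] by blast
  then show "f differentiable (at s)" by (rule differentiableI_vector)
qed

context nil2 begin

lemma covder_cong:
  assumes "open I" "s \<in> I" "\<And>t. t \<in> I \<Longrightarrow> \<gamma> t = \<gamma>' t" "\<And>t. t \<in> I \<Longrightarrow> Y t = Y' t"
  shows "covder br B \<gamma> Y s = covder br B \<gamma>' Y' s"
  unfolding covder_def using vel_cong[OF assms(1,2,3)] vel_cong[OF assms(1,2,4)] assms by simp

lemma jacobi_on_cong:
  assumes I: "open I" and eq: "\<And>t. t \<in> I \<Longrightarrow> \<gamma> t = \<gamma>' t"
  shows "jacobi_on br B I \<gamma> Y \<longleftrightarrow> jacobi_on br B I \<gamma>' Y"
proof -
  have c1: "covder br B \<gamma> Y s = covder br B \<gamma>' Y s" if "s \<in> I" for s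
    unfolding covder_def using vel_cong[OF I that eq] eq[OF that] by simp
  have c2: "covder br B \<gamma> (covder br B \<gamma> Y) s = covder br B \<gamma>' (covder br B \<gamma>' Y) s" if "s \<in> I" for s
    by (rule covder_cong[OF I that eq c1])
  have c3: "covder br B \<gamma> Y differentiable (at s) \<longleftrightarrow> covder br B \<gamma>' Y differentiable (at s)"
    if "s \<in> I" for s by (rule diff_cong[OF I that c1])
  have c4: "vel \<gamma> s = vel \<gamma>' s" if "s \<in> I" for s by (rule vel_cong[OF I that eq])
  show ?thesis unfolding jacobi_on_def
  proof (rule ball_cong[OF refl])
    fix s assume s: "s \<in> I"
    show "(Y differentiable at s \<and> covder br B \<gamma> Y differentiable at s \<and>
       covder br B \<gamma> (covder br B \<gamma> Y) s + curv br B (\<gamma> s) (Y s) (vel \<gamma> s) (vel \<gamma> s) = 0) =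
      (Y differentiable at s \<and> covder br B \<gamma>' Y differentiable at s \<and>
       covder br B \<gamma>' (covder br B \<gamma>' Y) s + curv br B (\<gamma>' s) (Y s) (vel \<gamma>' s) (vel \<gamma>' s) = 0)"
      unfolding c2[OF s] c3[OF s] c4[OF s] eq[OF s] ..
  qed
qed

end

context nil2 begin
definition cond :: "'n \<Rightarrow> bool" where
  "cond x \<longleftrightarrow> (\<exists>c. c \<noteq> 0 \<and> c + (1/12) *\<^sub>R br x (K c x) = 0)"

lemma locus_sub: "conj_locus br B \<subseteq> {x \<in> V. cond x}"
proof
  fix p assume "p \<in> conj_locus br B"
  then obtain \<gamma> I t where I: "is_interval I" "open I" "0 \<in> I" and t: "t \<in> I" "t \<noteq> 0"
    and geo: "geodesic_on br B I \<gamma>" and g0: "\<gamma> 0 = 0"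
    and v0: "vel \<gamma> 0 \<in> V - {0}" and conj: "conjugate_along br B I \<gamma> t" and p: "p = \<gamma> t"
    unfolding conj_locus_def by blast
  define x0 where "x0 = vel \<gamma> 0"
  have x0: "x0 \<in> V" using v0 x0_def by simp
  have gl: "\<And>s. s \<in> I \<Longrightarrow> \<gamma> s = s *\<^sub>R x0"
    by (rule geodesic_line[OF I geo g0 x0_def[symmetric] x0])
  obtain Y where J0: "jacobi_on br B I \<gamma> Y" and nz: "\<exists>s\<in>I. Y s \<noteq> 0" and Y0: "Y 0 = 0" and Yt: "Y t = 0"
    using conj unfolding conjugate_along_def by blast
  have J: "jacobi_on br B I (\<lambda>s. s *\<^sub>R x0) Y" using J0 jacobi_on_cong[OF I(2) gl] by simp
  have d1: "(Y has_vector_derivative vel Y s) (at s)" and d2: "(vel Y has_vector_derivative vel (vel Y) s) (at s)"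
    if "s \<in> I" for s using jacobi_regular[OF x0 I(2) J that] by auto
  have ode: "\<And>s. s \<in> I \<Longrightarrow> vel (vel Y) s = M x0 s (vel Y s) + (1/2) *\<^sub>R K (br x0 (Y s)) x0
                     + (s/4) *\<^sub>R br x0 (K (br x0 (Y s)) x0)"
    using jacobi_iff[OF x0 I(2) d1 d2] J by blast
  obtain c u1 where cC: "c \<in> C" and u1V: "u1 \<in> V" and
    Yf: "\<And>s. s \<in> I \<Longrightarrow> Y s - (s/2) *\<^sub>R br x0 (Y s) =
        (s *\<^sub>R u1 + (s^2/2) *\<^sub>R K c x0)
      + (s *\<^sub>R c - (s^2/2) *\<^sub>R br x0 u1 - (s^3/6) *\<^sub>R br x0 (K c x0))"
    using jacobi_solve[OF x0 I d1 d2 ode Y0] by blast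
  have Pu1: "Pz u1 = 0" by (rule Pz_onV[OF u1V])
  have Pc: "Pz c = c" by (rule Pz_onC[OF cC])
  have E: "0 = (t *\<^sub>R u1 + (t^2/2) *\<^sub>R K c x0)
      + (t *\<^sub>R c - (t^2/2) *\<^sub>R br x0 u1 - (t^3/6) *\<^sub>R br x0 (K c x0))"
    using Yf[OF t(1)] Yt by simp
  have Ez: "t *\<^sub>R c - (t^2/2) *\<^sub>R br x0 u1 - (t^3/6) *\<^sub>R br x0 (K c x0) = 0"
    using arg_cong[OF E, of Pz] by (simp add: Pu1 Pc)
  have Ev: "t *\<^sub>R u1 + (t^2/2) *\<^sub>R K c x0 = 0" using E Ez by simp
  have u1e: "u1 = -(t/2) *\<^sub>R K c x0"
  proof -
    have "t *\<^sub>R (u1 + (t/2) *\<^sub>R K c x0) = 0" using Ev by (simp add: algebra_simps power2_eq_square)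
    then have "u1 + (t/2) *\<^sub>R K c x0 = 0" using t(2) by simp
    then show ?thesis by (simp add: eq_neg_iff_add_eq_0)
  qed
  have ceq: "c + (t^2/12) *\<^sub>R br x0 (K c x0) = 0"
  proof -
    have h: "t *\<^sub>R c + (t * (t * t) / 4) *\<^sub>R br x0 (K c x0) = (t * (t * t) / 6) *\<^sub>R br x0 (K c x0)"
      using Ez unfolding u1e by (simp add: algebra_simps power2_eq_square power3_eq_cube)
    have "t *\<^sub>R (c + (t^2/12) *\<^sub>R br x0 (K c x0)) =
       (t *\<^sub>R c + (t * (t * t) / 4) *\<^sub>R br x0 (K c x0)) - (t * (t * t) / 6) *\<^sub>R br x0 (K c x0)"
      by (rule euclidean_eqI) (simp add: inner_simps field_simps power2_eq_square)
    then have "t *\<^sub>R (c + (t^2/12) *\<^sub>R br x0 (K c x0)) = 0" using h by simp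
    then show ?thesis using t(2) by simp
  qed
  have cnz: "c \<noteq> 0"
  proof
    assume c0: "c = 0"
    then have u10: "u1 = 0" using u1e by simp
    have "Y s = 0" if s: "s \<in> I" for s
    proof -
      have a: "Y s - (s/2) *\<^sub>R br x0 (Y s) = 0" using Yf[OF s] c0 u10 by simp
      then have "br x0 (Y s - (s/2) *\<^sub>R br x0 (Y s)) = 0" by simp
      then have "br x0 (Y s) = 0" by simp
      then show ?thesis using a by simp
    qed
    then show False using nz by blast
  qed
  have "cond (t *\<^sub>R x0)" unfolding cond_def
    by (rule exI[of _ c]) (use cnz ceq in \<open>simp add: power2_eq_square\<close>)
  moreover have "t *\<^sub>R x0 \<in> V" by (rule subspace_scale[OF subspace_V x0])
  ultimately show "p \<in> {x \<in> V. cond x}" using p gl[OF t(1)] by simp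
qed

end

context nil2 begin

lemma locus_sup: "{x \<in> V. cond x} \<subseteq> conj_locus br B"
proof
  fix x assume "x \<in> {x \<in> V. cond x}"
  then have xV: "x \<in> V" and "cond x" by auto
  then obtain c where cnz: "c \<noteq> 0" and ceq: "c + (1/12) *\<^sub>R br x (K c x) = 0"
    unfolding cond_def by blast
  define A where "A = K c x"
  have hA: "br x A = (-12) *\<^sub>R c"
  proof -
    have "(12::real) *\<^sub>R (c + (1/12) *\<^sub>R br x (K c x)) = 0" using ceq by simp
    then have "(12::real) *\<^sub>R c + br x A = 0" by (simp add: A_def algebra_simps)
    then show ?thesis by (simp add: eq_neg_iff_add_eq_0 add.commute)
  qed
  have cC: "c \<in> C"
  proof -
    have "c = (-1/12) *\<^sub>R br x A" using hA by simp
    then show ?thesis using subspace_scale[OF subspace_C br_in_C] by metis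
  qed
  have xc: "br x c = 0" by (rule C_br2[OF cC])
  have KA: "K A x = 0" by (simp add: A_def)
  have Anz: "A \<noteq> 0" using hA cnz by auto
  have xnz: "x \<noteq> 0" using Anz by (auto simp: A_def)
  define Y where "Y s = ((s^2 - s)/2) *\<^sub>R A + (s - s^3) *\<^sub>R c" for s
  define Y1 where "Y1 s = (s - 1/2) *\<^sub>R A + (1 - 3 * s^2) *\<^sub>R c" for s
  define Y2 where "Y2 s = A - (6 * s) *\<^sub>R c" for s
  have d1: "(Y has_vector_derivative Y1 t) (at t)" for t
    unfolding Y_def Y1_def
    by (auto intro!: derivative_eq_intros simp: algebra_simps power2_eq_square)
       (rule euclidean_eqI; simp add: inner_simps field_simps power2_eq_square)
  have d2: "(Y1 has_vector_derivative Y2 t) (at t)" for t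
    unfolding Y1_def Y2_def
    by (auto intro!: derivative_eq_intros simp: algebra_simps power2_eq_square)
  have J: "jacobi_on br B UNIV (\<lambda>t. t *\<^sub>R x) Y"
  proof (subst jacobi_iff[OF xV open_UNIV d1 d2], intro ballI)
    fix t :: real
    show "Y2 t = M x t (Y1 t) + (1/2) *\<^sub>R K (br x (Y t)) x + (t/4) *\<^sub>R br x (K (br x (Y t)) x)"
      unfolding M_def m1_def m2_def Y_def Y1_def Y2_def
      by (simp add: hA xc KA A_def[symmetric] algebra_simps)
         (rule euclidean_eqI; simp add: inner_simps field_simps power2_eq_square power3_eq_cube)
  qed
  have conj: "conjugate_along br B UNIV (\<lambda>t. t *\<^sub>R x) 1"
    unfolding conjugate_along_def
  proof (intro exI conjI)
    show "jacobi_on br B UNIV (\<lambda>t. t *\<^sub>R x) Y" by (rule J)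
    show "\<exists>t\<in>UNIV. Y t \<noteq> 0" using Anz by (intro bexI[of _ "-1"]) (simp_all add: Y_def)
    show "Y 0 = 0" by (simp add: Y_def)
    show "Y 1 = 0" by (simp add: Y_def)
  qed
  show "x \<in> conj_locus br B"
    unfolding conj_locus_def
  proof (intro CollectI exI conjI)
    show "x = 1 *\<^sub>R x" by simp
    show "is_interval (UNIV :: real set)" by simp
    show "open (UNIV :: real set)" by simp
    show "geodesic_on br B UNIV (\<lambda>t. t *\<^sub>R x)" by (rule geodesic_line_is[OF xV])
    show "vel (\<lambda>t. t *\<^sub>R x) 0 \<in> V - {0}" using xV xnz by (simp add: vel_line)
    show "conjugate_along br B UNIV (\<lambda>t. t *\<^sub>R x) 1" by (rule conj)
  qed simp_all
qed

lemma locus_eq: "conj_locus br B = {x \<in> V. cond x}"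
  using locus_sub locus_sup by blast

end


inductive polyf :: "('n::euclidean_space \<Rightarrow> real) \<Rightarrow> bool" where
  pconst: "polyf (\<lambda>x. k)"
| pcoord: "i \<in> Basis \<Longrightarrow> polyf (\<lambda>x. x \<bullet> i)"
| padd: "polyf f \<Longrightarrow> polyf g \<Longrightarrow> polyf (\<lambda>x. f x + g x)"
| pmult: "polyf f \<Longrightarrow> polyf g \<Longrightarrow> polyf (\<lambda>x. f x * g x)"

lemma polyf_sum: "finite S \<Longrightarrow> (\<And>i. i \<in> S \<Longrightarrow> polyf (f i)) \<Longrightarrow> polyf (\<lambda>x. \<Sum>i\<in>S. f i x)"
proof (induction S rule: finite_induct)
  case empty then show ?case using pconst[of 0] by simp
next
  case (insert a S) then show ?case using padd[of "f a" "\<lambda>x. \<Sum>i\<in>S. f i x"] by simp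
qed

lemma polyf_prod: "finite S \<Longrightarrow> (\<And>i. i \<in> S \<Longrightarrow> polyf (f i)) \<Longrightarrow> polyf (\<lambda>x. \<Prod>i\<in>S. f i x)"
proof (induction S rule: finite_induct)
  case empty then show ?case using pconst[of 1] by simp
next
  case (insert a S) then show ?case using pmult[of "f a" "\<lambda>x. \<Prod>i\<in>S. f i x"] by simp
qed

definition locrep :: "('n::euclidean_space \<Rightarrow> real) \<Rightarrow> 'n \<Rightarrow> bool" where
  "locrep f p \<longleftrightarrow> (\<exists>S c. finite S \<and> S \<subseteq> multi_indices \<and>
      (\<forall>h. f (p + h) = (\<Sum>\<alpha>\<in>S. c \<alpha> * monom h \<alpha>)))"

lemma monom_zero[simp]: "monom h (\<lambda>_. 0) = 1" by (simp add: monom_def)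

lemma monom_add: "monom h (\<lambda>j. \<alpha> j + \<beta> j) = monom h \<alpha> * monom h \<beta>"
  by (simp add: monom_def power_add prod.distrib)

lemma monom_delta: "i \<in> Basis \<Longrightarrow> monom h (\<lambda>j. if j = i then 1 else 0) = h \<bullet> i"
proof -
  assume i: "i \<in> Basis"
  have "monom h (\<lambda>j. if j = i then 1 else 0) = (\<Prod>j\<in>Basis. if j = i then h \<bullet> j else 1)"
    unfolding monom_def by (rule prod.cong) auto
  also have "\<dots> = h \<bullet> i" using i by (simp add: prod.delta)
  finally show ?thesis .
qed

lemma mi_zero: "(\<lambda>_. 0) \<in> multi_indices" by (simp add: multi_indices_def)
lemma mi_add: "\<alpha> \<in> multi_indices \<Longrightarrow> \<beta> \<in> multi_indices \<Longrightarrow> (\<lambda>j. \<alpha> j + \<beta> j) \<in> multi_indices"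
  by (simp add: multi_indices_def)
lemma mi_delta: "i \<in> Basis \<Longrightarrow> (\<lambda>j. if j = i then 1 else 0) \<in> multi_indices"
  by (auto simp: multi_indices_def)

lemma locrep_const: "locrep (\<lambda>x. k) p"
  unfolding locrep_def
  by (rule exI[of _ "{\<lambda>_. 0}"], rule exI[of _ "\<lambda>_. k"]) (simp add: mi_zero)

lemma locrep_coord: assumes i: "i \<in> Basis" shows "locrep (\<lambda>x. x \<bullet> i) p"
proof -
  define \<delta> :: "'a \<Rightarrow> nat" where "\<delta> = (\<lambda>j. if j = i then 1 else 0)"
  have ne: "(\<lambda>_. 0) \<noteq> \<delta>" unfolding \<delta>_def by (metis zero_neq_one)
  show ?thesis unfolding locrep_def
  proof (intro exI conjI allI)
    show "finite {(\<lambda>_. 0), \<delta>}" by simp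
    show "{(\<lambda>_. 0), \<delta>} \<subseteq> multi_indices" using mi_zero mi_delta[OF i] \<delta>_def by auto
    fix h :: 'a
    show "(p + h) \<bullet> i = (\<Sum>\<alpha>\<in>{(\<lambda>_. 0), \<delta>}. (\<lambda>\<alpha>. if \<alpha> = \<delta> then 1 else p \<bullet> i) \<alpha> * monom h \<alpha>)"
      using ne monom_delta[OF i, of h] unfolding \<delta>_def[symmetric]
      by (simp add: inner_add_left)
  qed
qed

lemma locrep_add: assumes "locrep f p" "locrep g p" shows "locrep (\<lambda>x. f x + g x) p"
proof -
  obtain S1 c1 where S1: "finite S1" "S1 \<subseteq> multi_indices" "\<And>h. f (p + h) = (\<Sum>\<alpha>\<in>S1. c1 \<alpha> * monom h \<alpha>)"
    using assms(1) unfolding locrep_def by blast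
  obtain S2 c2 where S2: "finite S2" "S2 \<subseteq> multi_indices" "\<And>h. g (p + h) = (\<Sum>\<alpha>\<in>S2. c2 \<alpha> * monom h \<alpha>)"
    using assms(2) unfolding locrep_def by blast
  define c where "c \<alpha> = (if \<alpha> \<in> S1 then c1 \<alpha> else 0) + (if \<alpha> \<in> S2 then c2 \<alpha> else 0)" for \<alpha>
  show ?thesis unfolding locrep_def
  proof (intro exI conjI allI)
    show "finite (S1 \<union> S2)" using S1 S2 by simp
    show "S1 \<union> S2 \<subseteq> multi_indices" using S1 S2 by simp
    fix h
    have a: "(\<Sum>\<alpha>\<in>S1 \<union> S2. (if \<alpha> \<in> S1 then c1 \<alpha> else 0) * monom h \<alpha>) = (\<Sum>\<alpha>\<in>S1. c1 \<alpha> * monom h \<alpha>)"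
      by (rule sum.mono_neutral_cong_right) (use S1 S2 in auto)
    have b: "(\<Sum>\<alpha>\<in>S1 \<union> S2. (if \<alpha> \<in> S2 then c2 \<alpha> else 0) * monom h \<alpha>) = (\<Sum>\<alpha>\<in>S2. c2 \<alpha> * monom h \<alpha>)"
      by (rule sum.mono_neutral_cong_right) (use S1 S2 in auto)
    show "f (p + h) + g (p + h) = (\<Sum>\<alpha>\<in>S1 \<union> S2. c \<alpha> * monom h \<alpha>)"
      unfolding c_def distrib_right sum.distrib a b S1(3) S2(3) ..
  qed
qed

lemma locrep_mult: assumes "locrep f p" "locrep g p" shows "locrep (\<lambda>x. f x * g x) p"
proof -
  obtain S1 c1 where S1: "finite S1" "S1 \<subseteq> multi_indices" "\<And>h. f (p + h) = (\<Sum>\<alpha>\<in>S1. c1 \<alpha> * monom h \<alpha>)"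
    using assms(1) unfolding locrep_def by blast
  obtain S2 c2 where S2: "finite S2" "S2 \<subseteq> multi_indices" "\<And>h. g (p + h) = (\<Sum>\<alpha>\<in>S2. c2 \<alpha> * monom h \<alpha>)"
    using assms(2) unfolding locrep_def by blast
  define ad :: "('a \<Rightarrow> nat) \<times> ('a \<Rightarrow> nat) \<Rightarrow> 'a \<Rightarrow> nat" where "ad = (\<lambda>(\<alpha>, \<beta>). (\<lambda>j. \<alpha> j + \<beta> j :: nat))"
  define P where "P = S1 \<times> S2"
  define c where "c \<gamma> = (\<Sum>x\<in>{x \<in> P. ad x = \<gamma>}. c1 (fst x) * c2 (snd x))" for \<gamma>
  have fP: "finite P" using S1 S2 P_def by simp
  show ?thesis unfolding locrep_def
  proof (intro exI conjI allI)
    show "finite (ad ` P)" using fP by simp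
    show "ad ` P \<subseteq> multi_indices" using S1(2) S2(2) unfolding P_def ad_def by (auto intro!: mi_add)
    fix h
    let ?g = "\<lambda>x. c1 (fst x) * c2 (snd x) * monom h (ad x)"
    have "f (p + h) * g (p + h) = (\<Sum>\<alpha>\<in>S1. \<Sum>\<beta>\<in>S2. (c1 \<alpha> * monom h \<alpha>) * (c2 \<beta> * monom h \<beta>))"
      unfolding S1(3) S2(3) by (simp add: sum_product)
    also have "\<dots> = (\<Sum>(\<alpha>,\<beta>)\<in>S1\<times>S2. (c1 \<alpha> * monom h \<alpha>) * (c2 \<beta> * monom h \<beta>))"
      by (rule sum.cartesian_product)
    also have "\<dots> = (\<Sum>x\<in>P. ?g x)"
      unfolding P_def by (rule sum.cong) (auto simp: ad_def monom_add mult_ac)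
    also have "\<dots> = (\<Sum>\<gamma>\<in>ad ` P. \<Sum>x\<in>{x \<in> P. ad x = \<gamma>}. ?g x)"
      by (rule sum.image_gen[OF fP])
    also have "\<dots> = (\<Sum>\<gamma>\<in>ad ` P. c \<gamma> * monom h \<gamma>)"
      unfolding c_def sum_distrib_right by (rule sum.cong[OF refl], rule sum.cong) auto
    finally show "f (p + h) * g (p + h) = (\<Sum>\<gamma>\<in>ad ` P. c \<gamma> * monom h \<gamma>)" .
  qed
qed

lemma polyf_locrep: "polyf f \<Longrightarrow> locrep f p"
  by (induction rule: polyf.induct) (auto intro: locrep_const locrep_coord locrep_add locrep_mult)

lemma polyf_analytic: assumes "polyf f" shows "real_analytic_at f p"
proof -
  obtain S c where S: "finite S" "S \<subseteq> multi_indices" "\<And>h. f (p + h) = (\<Sum>\<alpha>\<in>S. c \<alpha> * monom h \<alpha>)"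
    using polyf_locrep[OF assms, of p] unfolding locrep_def by blast
  define c' where "c' \<alpha> = (if \<alpha> \<in> S then c \<alpha> else 0)" for \<alpha>
  show ?thesis unfolding real_analytic_at_def
  proof (intro exI[of _ 1] conjI exI[of _ c'] allI impI)
    fix h :: 'a
    show "((\<lambda>\<alpha>. c' \<alpha> * monom h \<alpha>) has_sum f (p + h)) multi_indices"
      by (rule has_sum_finite_neutralI[OF S(1) S(2)]) (auto simp: c'_def S(3))
  qed simp
qed



definition bsl :: "'n::euclidean_space list" where "bsl = (SOME xs. set xs = Basis \<and> distinct xs)"

lemma bsl: "set (bsl :: 'n::euclidean_space list) = Basis" "distinct (bsl :: 'n list)"
proof -
  have "\<exists>xs. set xs = (Basis :: 'n set) \<and> distinct xs" by (rule finite_distinct_list) simp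
  then have "set (bsl :: 'n list) = Basis \<and> distinct (bsl :: 'n list)"
    unfolding bsl_def by (rule someI_ex)
  then show "set (bsl :: 'n::euclidean_space list) = Basis" "distinct (bsl :: 'n list)" by auto
qed

lemma bsl_in: "j < length (bsl :: 'n::euclidean_space list) \<Longrightarrow> bsl ! j \<in> (Basis :: 'n set)"
  using bsl(1) nth_mem by blast

lemma bsl_orth: "i < length (bsl :: 'n::euclidean_space list) \<Longrightarrow> j < length (bsl :: 'n list) \<Longrightarrow>
   inner (bsl ! j) (bsl ! i :: 'n) = (if i = j then 1 else 0)"
proof -
  assume i: "i < length (bsl :: 'n::euclidean_space list)" and j: "j < length (bsl :: 'n list)"
  have bi: "bsl ! i \<in> (Basis :: 'n set)" using bsl_in[OF i] .
  have bj: "bsl ! j \<in> (Basis :: 'n set)" using bsl_in[OF j] .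
  have "(bsl ! j = (bsl ! i :: 'n)) = (j = i)" by (rule nth_eq_iff_index_eq[OF bsl(2) j i])
  then show "inner (bsl ! j) (bsl ! i :: 'n) = (if i = j then 1 else 0)"
    using inner_Basis[OF bj bi] by auto
qed

lemma sum_bsl: "(\<Sum>b\<in>(Basis :: 'n::euclidean_space set). f b) = (\<Sum>j<length (bsl :: 'n list). f (bsl ! j))"
proof -
  have "(\<Sum>j<length (bsl :: 'n list). f (bsl ! j)) = sum f (nth bsl ` {..<length (bsl :: 'n list)})"
    by (rule sum.reindex[symmetric, unfolded comp_def]) (rule inj_on_nth[OF bsl(2)], simp)
  also have "nth bsl ` {..<length (bsl :: 'n list)} = (Basis :: 'n set)"
    using bsl(1) by (auto simp: set_conv_nth)
  finally show ?thesis by simp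
qed

lemma repr_bsl: "(y :: 'n::euclidean_space) = (\<Sum>j<length (bsl :: 'n list). inner y (bsl ! j) *\<^sub>R bsl ! j)"
  using euclidean_representation[of y] sum_bsl[of "\<lambda>b. inner y b *\<^sub>R b"] by simp

definition matN :: "('n::euclidean_space \<Rightarrow> 'n) \<Rightarrow> real mat" where
  "matN N = mat (length (bsl :: 'n list)) (length (bsl :: 'n list)) (\<lambda>(i,j). inner (N (bsl ! j)) (bsl ! i))"

lemma matN_carrier: "matN (N :: 'n::euclidean_space \<Rightarrow> 'n) \<in> carrier_mat (length (bsl :: 'n list)) (length (bsl :: 'n list))"
  unfolding matN_def by simp

lemma matN_mult:
  fixes N :: "'n::euclidean_space \<Rightarrow> 'n"
  assumes lin: "linear N" and v: "v \<in> carrier_vec (length (bsl :: 'n list))" and i: "i < length (bsl :: 'n list)"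
  shows "vec_index (matN N *\<^sub>v v) i = inner (N (\<Sum>j<length (bsl :: 'n list). vec_index v j *\<^sub>R bsl ! j)) (bsl ! i)"
proof -
  have "vec_index (matN N *\<^sub>v v) i = (\<Sum>j\<in>{0..<length (bsl :: 'n list)}. inner (N (bsl ! j)) (bsl ! i) * vec_index v j)"
    using v i unfolding matN_def by (simp add: scalar_prod_def)
  also have "\<dots> = inner (N (\<Sum>j<length (bsl :: 'n list). vec_index v j *\<^sub>R bsl ! j)) (bsl ! i)"
    by (simp add: linear_sum[OF lin] linear_scale[OF lin] inner_sum_left atLeast0LessThan mult.commute)
  finally show ?thesis .
qed

lemma det_matN_zero:
  fixes N :: "'n::euclidean_space \<Rightarrow> 'n"
  assumes lin: "linear N"
  shows "Determinant.det (matN N) = 0 \<longleftrightarrow> (\<exists>y. y \<noteq> 0 \<and> N y = 0)"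
proof -
  let ?n = "length (bsl :: 'n list)"
  have "Determinant.det (matN N) = 0 \<longleftrightarrow> (\<exists>v. v \<in> carrier_vec ?n \<and> v \<noteq> 0\<^sub>v ?n \<and> matN N *\<^sub>v v = 0\<^sub>v ?n)"
    by (rule det_0_iff_vec_prod_zero_field[OF matN_carrier])
  also have "\<dots> \<longleftrightarrow> (\<exists>y. y \<noteq> 0 \<and> N y = 0)"
  proof
    assume "\<exists>v. v \<in> carrier_vec ?n \<and> v \<noteq> 0\<^sub>v ?n \<and> matN N *\<^sub>v v = 0\<^sub>v ?n"
    then obtain v where v: "v \<in> carrier_vec ?n" "v \<noteq> 0\<^sub>v ?n" "matN N *\<^sub>v v = 0\<^sub>v ?n" by blast
    define y :: 'n where "y = (\<Sum>j<?n. vec_index v j *\<^sub>R bsl ! j)"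
    have yc: "inner y (bsl ! i) = vec_index v i" if "i < ?n" for i
    proof -
      have "inner y (bsl ! i) = (\<Sum>j<?n. vec_index v j * (if i = j then 1 else 0))"
        unfolding y_def inner_sum_left
      proof (rule sum.cong[OF refl])
        fix x assume "x \<in> {..<?n}"
        then have x: "x < ?n" by simp
        show "inner (vec_index v x *\<^sub>R (bsl ! x :: 'n)) (bsl ! i) = vec_index v x * (if i = x then 1 else 0)"
          by (simp only: inner_scaleR_left bsl_orth[OF that x])
      qed
      also have "\<dots> = vec_index v i" using that by (simp add: if_distrib[of "\<lambda>x. _ * x"] cong: if_cong)
      finally show ?thesis .
    qed
    have "N y = 0"
    proof (rule euclidean_eqI)
      fix b :: 'n assume b: "b \<in> Basis"
      then obtain i where i: "i < ?n" "b = bsl ! i" using bsl(1) by (metis in_set_conv_nth)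
      have "inner (N y) b = vec_index (matN N *\<^sub>v v) i" using matN_mult[OF lin v(1) i(1)] i y_def by simp
      also have "\<dots> = 0" using v(3) i by simp
      finally show "inner (N y) b = inner 0 b" by simp
    qed
    moreover have "y \<noteq> 0"
    proof
      assume "y = 0"
      then have "vec_index v i = 0" if "i < ?n" for i using yc[OF that] by simp
      then have "v = 0\<^sub>v ?n" using v(1) by (intro eq_vecI) auto
      then show False using v(2) by simp
    qed
    ultimately show "\<exists>y. y \<noteq> 0 \<and> N y = 0" by blast
  next
    assume "\<exists>y. y \<noteq> 0 \<and> N y = 0"
    then obtain y where y: "y \<noteq> 0" "N y = 0" by blast
    define v where "v = vec ?n (\<lambda>j. inner y (bsl ! j))"
    have vc: "v \<in> carrier_vec ?n" by (simp add: v_def)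
    have "v \<noteq> 0\<^sub>v ?n"
    proof
      assume "v = 0\<^sub>v ?n"
      then have "inner y (bsl ! j) = 0" if "j < ?n" for j
      proof -
        have "vec_index v j = vec_index (0\<^sub>v ?n) j" using \<open>v = 0\<^sub>v ?n\<close> by simp
        then show ?thesis using that unfolding v_def by simp
      qed
      then have "y = 0" using repr_bsl[of y] by simp
      then show False using y(1) by simp
    qed
    moreover have "matN N *\<^sub>v v = 0\<^sub>v ?n"
    proof (rule eq_vecI)
      fix i assume "i < dim_vec (0\<^sub>v ?n :: real vec)"
      then have i: "i < ?n" by simp
      have "vec_index (matN N *\<^sub>v v) i = inner (N y) (bsl ! i)"
        unfolding matN_mult[OF lin vc i] by (simp add: v_def repr_bsl[of y, symmetric])
      then show "vec_index (matN N *\<^sub>v v) i = vec_index (0\<^sub>v ?n) i" using y(2) i by simp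
    qed (simp add: matN_def)
    ultimately show "\<exists>v. v \<in> carrier_vec ?n \<and> v \<noteq> 0\<^sub>v ?n \<and> matN N *\<^sub>v v = 0\<^sub>v ?n" using vc by blast
  qed
  finally show ?thesis .
qed

lemma polyf_det:
  fixes N :: "'n::euclidean_space \<Rightarrow> 'n \<Rightarrow> 'n"
  assumes "\<And>i j. i < length (bsl :: 'n list) \<Longrightarrow> j < length (bsl :: 'n list) \<Longrightarrow>
      polyf (\<lambda>x. inner (N x (bsl ! j)) (bsl ! i))"
  shows "polyf (\<lambda>x. Determinant.det (matN (N x)))"
proof -
  let ?n = "length (bsl :: 'n list)"
  have eq: "Determinant.det (matN (N x)) = (\<Sum>p\<in>{p. p permutes {0..<?n}}.
      signof p * (\<Prod>i = 0..<?n. inner (N x (bsl ! p i)) (bsl ! i)))" for x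
  proof -
    have "Determinant.det (matN (N x)) = (\<Sum>p\<in>{p. p permutes {0..<?n}}.
      signof p * (\<Prod>i = 0..<?n. matN (N x) $$ (i, p i)))"
      by (rule det_def'[OF matN_carrier])
    also have "\<dots> = (\<Sum>p\<in>{p. p permutes {0..<?n}}.
      signof p * (\<Prod>i = 0..<?n. inner (N x (bsl ! p i)) (bsl ! i)))"
    proof (rule sum.cong[OF refl])
      fix p assume "p \<in> {p. p permutes {0..<?n}}"
      then have p: "p permutes {0..<?n}" by simp
      have "p i < ?n" if "i < ?n" for i using permutes_in_image[OF p, of i] that by simp
      then show "signof p * (\<Prod>i = 0..<?n. matN (N x) $$ (i, p i)) =
          signof p * (\<Prod>i = 0..<?n. inner (N x (bsl ! p i)) (bsl ! i))"
        unfolding matN_def by (intro arg_cong[where f="\<lambda>z. signof p * z"] prod.cong) auto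
    qed
    finally show ?thesis .
  qed
  show ?thesis unfolding eq
  proof (rule polyf_sum)
    show "finite {p. p permutes {0..<?n}}" by (rule finite_permutations) simp
    fix p assume "p \<in> {p. p permutes {0..<?n}}"
    then have p: "p permutes {0..<?n}" by simp
    have "polyf (\<lambda>x. \<Prod>i = 0..<?n. inner (N x (bsl ! p i)) (bsl ! i))"
    proof (rule polyf_prod)
      fix i assume "i \<in> {0..<?n}"
      then show "polyf (\<lambda>x. inner (N x (bsl ! p i)) (bsl ! i))"
        using assms permutes_in_image[OF p, of i] by simp
    qed simp
    then show "polyf (\<lambda>x. signof p * (\<Prod>i = 0..<?n. inner (N x (bsl ! p i)) (bsl ! i)))"
      using pmult[OF pconst] by blast
  qed
qed


context nil2 begin

definition Nx :: "'n \<Rightarrow> 'n \<Rightarrow> 'n" where "Nx x y = y + (1/12) *\<^sub>R br x (K y x)"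

lemma Nx_linear: "linear (Nx x)"
  by (rule linearI) (simp_all add: Nx_def algebra_simps)

lemma cond_det: "cond x \<longleftrightarrow> Determinant.det (matN (Nx x)) = 0"
  unfolding det_matN_zero[OF Nx_linear] cond_def Nx_def by blast

lemma K_sum2: "K a (sum f S) = (\<Sum>i\<in>S. K a (f i))"
proof -
  have "linear (K a)" by (rule linearI) simp_all
  then show ?thesis by (rule linear_sum)
qed

lemma br_expand: "br x (K b x) = (\<Sum>l\<in>Basis. \<Sum>k\<in>Basis. ((x \<bullet> l) * (x \<bullet> k)) *\<^sub>R br k (K b l))"
proof -
  have "br x (K b x) = br (\<Sum>k\<in>Basis. (x \<bullet> k) *\<^sub>R k) (K b (\<Sum>l\<in>Basis. (x \<bullet> l) *\<^sub>R l))"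
    by (simp add: euclidean_representation)
  also have "\<dots> = (\<Sum>l\<in>Basis. \<Sum>k\<in>Basis. ((x \<bullet> l) * (x \<bullet> k)) *\<^sub>R br k (K b l))"
    by (simp add: br_sum1 br_sum2 K_sum2 scaleR_sum_right)
  finally show ?thesis .
qed

lemma polyf_entry: "polyf (\<lambda>x. inner (Nx x b) e)"
proof -
  have eq: "inner (Nx x b) e = inner b e + (1/12) *
      (\<Sum>l\<in>Basis. \<Sum>k\<in>Basis. ((x \<bullet> l) * (x \<bullet> k)) * inner (br k (K b l)) e)" for x
    unfolding Nx_def br_expand by (simp add: inner_sum_left inner_add_left)
  show ?thesis unfolding eq
    by (intro padd pconst pmult polyf_sum pcoord) simp_all
qed

lemma polyf_detN: "polyf (\<lambda>x. Determinant.det (matN (Nx x)))"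
  by (rule polyf_det) (rule polyf_entry)

lemma analytic_locus: "real_analytic_subset V (conj_locus br B)"
  unfolding real_analytic_subset_def
proof (intro conjI ballI)
  show "conj_locus br B \<subseteq> V" unfolding locus_eq by blast
  fix p assume "p \<in> V"
  show "\<exists>U F. open U \<and> p \<in> U \<and> finite F \<and> (\<forall>f\<in>F. real_analytic_on U f) \<and>
          conj_locus br B \<inter> U = {x \<in> V \<inter> U. \<forall>f\<in>F. f x = 0}"
  proof (intro exI conjI)
    show "open (UNIV :: 'n set)" by simp
    show "p \<in> UNIV" by simp
    show "finite {\<lambda>x. Determinant.det (matN (Nx x))}" by simp
    show "\<forall>f\<in>{\<lambda>x. Determinant.det (matN (Nx x))}. real_analytic_on UNIV f"
      using polyf_analytic[OF polyf_detN] unfolding real_analytic_on_def by simp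
    show "conj_locus br B \<inter> UNIV = {x \<in> V \<inter> UNIV. \<forall>f\<in>{\<lambda>x. Determinant.det (matN (Nx x))}. f x = 0}"
      unfolding locus_eq cond_det by simp
  qed
qed

end

theorem mainTheorem4:
  fixes br :: "'n::euclidean_space \<Rightarrow> 'n \<Rightarrow> 'n" and B :: "'n \<Rightarrow> 'n \<Rightarrow> real"
  assumes "two_step_nilpotent br"
    and "scalar_product B"
    and "nondeg_on B (center br)"
  shows "conj_locus br B \<subseteq> orth_compl B (center br) \<and>
         real_analytic_subset (orth_compl B (center br)) (conj_locus br B)"
proof -
  interpret nil2 br B using assms by unfold_locales
  show ?thesis using analytic_locus unfolding real_analytic_subset_def by blast
qed


end
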